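(* Let $f=f(\rho,u)$ be smooth with $f_u\le0$ on $[0,\infty)\times\mathbb{R}$, let $(\rho_0,u_0)\in C^1_b(\mathbb{R})\times C^2_b(\mathbb{R})$ with $\rho_0\ge0$ and $e_0=u_0'+\rho_0\ge0$ on $\mathbb{R}$, and let $(\rho,u)$ be a classical solution of $(S_f)$ on $[0,T)$ that is smooth enough that $\xi:=\rho_x$ and $\eta:=e_x$ (with $e=u_x+\rho$) are $C^1$ and bounded on $[0,t]\times\mathbb{R}$ for each $t<T$. (1) If $\rho_0'\ge0$ and $e_0'=u_0''+\rho_0'\ge0$ on $\mathbb{R}$, and $(\rho f)_{\rho\rho}\ge0$, $f_{uu}\le0$ on $[0,\infty)\times\mathbb{R}$, then $\xi\ge0$ and $\eta\ge0$ on $[0,T)\times\mathbb{R}$, and $\xi$ is bounded above on $[0,t]\times\mathbb{R}$ for each $t<T$ by a bound not depending on the a priori bounds of $\xi$. (2) If $\rho_0'\le0$ and $u_0''+\rho_0'\le0$ on $\mathbb{R}$, and $(\rho f)_{\rho\rho}\le0$, $f_{uu}\ge0$ on $[0,\infty)\times\mathbb{R}$, then $\xi\le0$ and $\eta\le0$ on $[0,T)\times\mathbb{R}$, and $\xi$ is bounded below on $[0,t]\times\mathbb{R}$ for each $t<T$ by a bound not depending on the a priori bounds of $\xi$.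
   Context: Let $f$ be a smooth real function of $(\rho,u)$; subscripts denote partial derivatives. System $(S_f)$ is: $\rho_t+(\rho f(\rho,u))_x=0$, $u_t+uu_x=\rho\,(f(\rho,u)-u)$ for $x\in\mathbb{R}$, $t>0$, with $\rho(0,x)=\rho_0(x)\ge0$, $u(0,x)=u_0(x)$. A classical solution on $[0,T)$ is a pair $\rho,u\in C^1([0,T)\times\mathbb{R})$ satisfying the equations pointwise and the initial data, such that $\rho,u,\rho_x,u_x$ are bounded on $[0,t]\times\mathbb{R}$ for every $t<T$. We write $e:=u_x+\rho$, $e_0:=u_0'+\rho_0$. $C^k_b(\mathbb{R})$ denotes bounded $C^k$ functions with bounded derivatives up to order $k$. *)

theory Defs
  imports "HOL-Analysis.Analysis"
begin

definition pt :: "(real \<Rightarrow> real \<Rightarrow> real) \<Rightarrow> real \<Rightarrow> real \<Rightarrow> real" where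
  "pt g t x = deriv (\<lambda>s. g s x) t"

definition px :: "(real \<Rightarrow> real \<Rightarrow> real) \<Rightarrow> real \<Rightarrow> real \<Rightarrow> real" where
  "px g t x = deriv (\<lambda>y. g t y) x"

definition C1_on :: "(real \<times> real) set \<Rightarrow> (real \<Rightarrow> real \<Rightarrow> real) \<Rightarrow> bool" where
  "C1_on S g \<longleftrightarrow> (\<exists>gt gx :: real \<Rightarrow> real \<Rightarrow> real.
      continuous_on S (\<lambda>(t,x). gt t x) \<and> continuous_on S (\<lambda>(t,x). gx t x) \<and>
      (\<forall>(t,x)\<in>S. ((\<lambda>(s,y). g s y) has_derivative (\<lambda>(a,b). a * gt t x + b * gx t x))
                     (at (t,x) within S)))"

definition smooth2 :: "(real \<Rightarrow> real \<Rightarrow> real) \<Rightarrow> bool" where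
  "smooth2 f \<longleftrightarrow> (\<exists>D :: nat \<Rightarrow> nat \<Rightarrow> real \<Rightarrow> real \<Rightarrow> real. D 0 0 = f \<and>
      (\<forall>i j. continuous_on UNIV (\<lambda>(r,v). D i j r v) \<and>
        (\<forall>r v. ((\<lambda>s. D i j s v) has_real_derivative D (Suc i) j r v) (at r) \<and>
               ((\<lambda>w. D i j r w) has_real_derivative D i (Suc j) r v) (at v))))"

definition C1b :: "(real \<Rightarrow> real) \<Rightarrow> bool" where
  "C1b g \<longleftrightarrow> (\<forall>x. g differentiable (at x)) \<and> continuous_on UNIV (deriv g) \<and>
              bounded (range g) \<and> bounded (range (deriv g))"

definition C2b :: "(real \<Rightarrow> real) \<Rightarrow> bool" where
  "C2b g \<longleftrightarrow> C1b g \<and> C1b (deriv g)"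

definition classical_solution ::
  "(real \<Rightarrow> real \<Rightarrow> real) \<Rightarrow> real \<Rightarrow> (real \<Rightarrow> real) \<Rightarrow> (real \<Rightarrow> real)
   \<Rightarrow> (real \<Rightarrow> real \<Rightarrow> real) \<Rightarrow> (real \<Rightarrow> real \<Rightarrow> real) \<Rightarrow> bool" where
  "classical_solution f T rho0 u0 rho u \<longleftrightarrow>
     C1_on ({0..<T} \<times> UNIV) rho \<and> C1_on ({0..<T} \<times> UNIV) u \<and>
     (\<forall>x. rho 0 x = rho0 x \<and> u 0 x = u0 x) \<and>
     (\<forall>t\<in>{0<..<T}. \<forall>x.
        pt rho t x + px (\<lambda>s y. rho s y * f (rho s y) (u s y)) t x = 0 \<and>
        pt u t x + u t x * px u t x = rho t x * (f (rho t x) (u t x) - u t x)) \<and>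
     (\<forall>t<T. \<exists>B. \<forall>s\<in>{0..t}. \<forall>x.
        \<bar>rho s x\<bar> \<le> B \<and> \<bar>u s x\<bar> \<le> B \<and> \<bar>px rho s x\<bar> \<le> B \<and> \<bar>px u s x\<bar> \<le> B)"

definition efun :: "(real \<Rightarrow> real \<Rightarrow> real) \<Rightarrow> (real \<Rightarrow> real \<Rightarrow> real) \<Rightarrow> real \<Rightarrow> real \<Rightarrow> real" where
  "efun rho u t x = px u t x + rho t x"

definition extra_regular :: "real \<Rightarrow> (real \<Rightarrow> real \<Rightarrow> real) \<Rightarrow> (real \<Rightarrow> real \<Rightarrow> real) \<Rightarrow> bool" where
  "extra_regular T rho u \<longleftrightarrow>
     (\<forall>t\<in>{0..<T}. \<forall>x. (\<lambda>y. efun rho u t y) differentiable (at x)) \<and>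
     C1_on ({0..<T} \<times> UNIV) (px rho) \<and> C1_on ({0..<T} \<times> UNIV) (px (efun rho u)) \<and>
     (\<forall>t<T. \<exists>B. \<forall>s\<in>{0..t}. \<forall>x. \<bar>px rho s x\<bar> \<le> B \<and> \<bar>px (efun rho u) s x\<bar> \<le> B)"

end

theory Submission
  imports Defs
begin

lemma mvt_any:
  fixes f f' :: "real \<Rightarrow> real"
  assumes "\<And>y. \<bar>y - x\<bar> \<le> \<bar>h\<bar> \<Longrightarrow> (f has_real_derivative f' y) (at y)"
  shows "\<exists>z. \<bar>z - x\<bar> \<le> \<bar>h\<bar> \<and> f (x + h) - f x = h * f' z"
proof (cases "h = 0")
  case True then show ?thesis by (intro exI[of _ x]) simp
next
  case False
  show ?thesis
  proof (cases "h > 0")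
    case True
    have "\<exists>z. x < z \<and> z < x + h \<and> f (x + h) - f x = (x + h - x) * f' z"
      by (rule MVT2) (use True assms in auto)
    then obtain z where "x < z" "z < x + h" "f (x + h) - f x = (x + h - x) * f' z" by blast
    then show ?thesis using True by (intro exI[of _ z]) auto
  next
    case False
    with \<open>h \<noteq> 0\<close> have hn: "h < 0" by simp
    have "\<exists>z. x + h < z \<and> z < x \<and> f x - f (x + h) = (x - (x + h)) * f' z"
      by (rule MVT2) (use hn assms in auto)
    then obtain z where "x + h < z" "z < x" "f x - f (x + h) = (x - (x + h)) * f' z" by blast
    then show ?thesis using hn by (intro exI[of _ z]) (auto simp: algebra_simps)
  qed
qed

lemma schwarz:
  fixes F Ft Fx G :: "real \<Rightarrow> real \<Rightarrow> real"
  assumes d0: "0 < d"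
    and Ft: "\<And>s y. \<bar>s - t\<bar> < d \<Longrightarrow> \<bar>y - x\<bar> < d \<Longrightarrow> ((\<lambda>s'. F s' y) has_real_derivative Ft s y) (at s)"
    and Fx: "\<And>s y. \<bar>s - t\<bar> < d \<Longrightarrow> \<bar>y - x\<bar> < d \<Longrightarrow> ((\<lambda>y'. F s y') has_real_derivative Fx s y) (at y)"
    and G: "\<And>s y. \<bar>s - t\<bar> < d \<Longrightarrow> \<bar>y - x\<bar> < d \<Longrightarrow> ((\<lambda>s'. Fx s' y) has_real_derivative G s y) (at s)"
    and Gc: "\<forall>e>0. \<exists>\<delta>>0. \<forall>s y. \<bar>s - t\<bar> < \<delta> \<longrightarrow> \<bar>y - x\<bar> < \<delta> \<longrightarrow> \<bar>G s y - G t x\<bar> < e"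
  shows "((\<lambda>y. Ft t y) has_real_derivative G t x) (at x)"
  unfolding DERIV_def
proof (rule tendstoI)
  fix e :: real assume e: "e > 0"
  obtain \<delta>0 where \<delta>0: "\<delta>0 > 0" and cG: "\<And>s y. \<bar>s - t\<bar> < \<delta>0 \<Longrightarrow> \<bar>y - x\<bar> < \<delta>0 \<Longrightarrow> \<bar>G s y - G t x\<bar> < e/2"
    using Gc e by (meson half_gt_zero)
  define \<delta> where "\<delta> = min \<delta>0 d / 2"
  have \<delta>: "\<delta> > 0" "\<delta> < d" "\<delta> < \<delta>0" using \<delta>0 d0 by (auto simp: \<delta>_def)
  have key: "\<bar>(Ft t (x + h) - Ft t x) / h - G t x\<bar> \<le> e/2" if h: "h \<noteq> 0" "\<bar>h\<bar> < \<delta>" for h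
  proof -
    define \<Delta> where "\<Delta> k = (F (t + k) (x + h) - F (t + k) x - F t (x + h) + F t x) / (h * k)" for k
    have lim: "(\<Delta> \<longlongrightarrow> (Ft t (x + h) - Ft t x) / h) (at 0)"
    proof -
      have d1: "((\<lambda>s'. F s' (x + h)) has_real_derivative Ft t (x + h)) (at t)"
        using Ft[of t "x+h"] h \<delta> by auto
      have d2: "((\<lambda>s'. F s' x) has_real_derivative Ft t x) (at t)"
        using Ft[of t x] d0 by auto
      have "((\<lambda>k. (F (t + k) (x + h) - F t (x + h)) / k) \<longlongrightarrow> Ft t (x + h)) (at 0)"
        using d1 unfolding DERIV_def .
      moreover have "((\<lambda>k. (F (t + k) x - F t x) / k) \<longlongrightarrow> Ft t x) (at 0)"
        using d2 unfolding DERIV_def .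
      ultimately have "((\<lambda>k. ((F (t + k) (x + h) - F t (x + h)) / k - (F (t + k) x - F t x) / k) / h)
          \<longlongrightarrow> (Ft t (x + h) - Ft t x) / h) (at 0)"
        by (intro tendsto_intros) (use h in auto)
      moreover have "((F (t + k) (x + h) - F t (x + h)) / k - (F (t + k) x - F t x) / k) / h = \<Delta> k" for k
        by (simp add: \<Delta>_def diff_divide_distrib add_divide_distrib) (simp add: field_simps)
      ultimately show ?thesis by simp
    qed
    have ev: "\<forall>\<^sub>F k in at 0. \<bar>\<Delta> k - G t x\<bar> \<le> e/2"
    proof -
      have "\<forall>\<^sub>F k in at (0::real). k \<noteq> 0 \<and> \<bar>k\<bar> < \<delta>"
        using eventually_at_ball[OF \<delta>(1), of "0::real" UNIV]
        by (auto simp: eventually_at dist_real_def intro!: exI[of _ \<delta>] \<delta>)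
      then show ?thesis
      proof eventually_elim
        case (elim k)
        then have k: "k \<noteq> 0" "\<bar>k\<bar> < \<delta>" by auto
        define \<psi> where "\<psi> y = F (t + k) y - F t y" for y
        have "\<exists>z. \<bar>z - x\<bar> \<le> \<bar>h\<bar> \<and> \<psi> (x + h) - \<psi> x = h * (Fx (t + k) z - Fx t z)"
          unfolding \<psi>_def
          by (rule mvt_any, intro DERIV_diff Fx) (use k h \<delta> in auto)
        then obtain z where z: "\<bar>z - x\<bar> \<le> \<bar>h\<bar>" "\<psi> (x + h) - \<psi> x = h * (Fx (t + k) z - Fx t z)" by blast
        have "\<exists>w. \<bar>w - t\<bar> \<le> \<bar>k\<bar> \<and> Fx (t + k) z - Fx t z = k * G w z"
          by (rule mvt_any, rule G) (use k h \<delta> z in auto)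
        then obtain w where w: "\<bar>w - t\<bar> \<le> \<bar>k\<bar>" "Fx (t + k) z - Fx t z = k * G w z" by blast
        have "\<Delta> k = G w z"
          using z w k h unfolding \<Delta>_def \<psi>_def by (simp add: field_simps)
        moreover have "\<bar>G w z - G t x\<bar> < e/2"
          by (rule cG) (use w z k h \<delta> in auto)
        ultimately show ?case by simp
      qed
    qed
    have "\<bar>(Ft t (x + h) - Ft t x) / h - G t x\<bar> \<le> e/2"
    proof -
      have "((\<lambda>k. \<bar>\<Delta> k - G t x\<bar>) \<longlongrightarrow> \<bar>(Ft t (x + h) - Ft t x) / h - G t x\<bar>) (at 0)"
        by (intro tendsto_intros lim)
      then show ?thesis
        by (rule tendsto_upperbound) (use ev in auto)
    qed
    then show ?thesis .
  qed
  have "\<forall>\<^sub>F h in at (0::real). h \<noteq> 0 \<and> \<bar>h\<bar> < \<delta>"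
    by (auto simp: eventually_at dist_real_def intro!: exI[of _ \<delta>] \<delta>)
  then show "\<forall>\<^sub>F h in at 0. dist ((Ft t (x + h) - Ft t x) / h) (G t x) < e"
  proof eventually_elim
    case (elim h)
    then show ?case using key[of h] e by (auto simp: dist_real_def)
  qed
qed


lemma frechet2:
  fixes h hr hv :: "real \<Rightarrow> real \<Rightarrow> real"
  assumes hr: "\<And>r v. ((\<lambda>s. h s v) has_real_derivative hr r v) (at r)"
    and hv: "\<And>r v. ((\<lambda>w. h r w) has_real_derivative hv r v) (at v)"
    and cv: "continuous_on UNIV (\<lambda>(r,v). hv r v)"
  shows "((\<lambda>(r,v). h r v) has_derivative (\<lambda>(a,b). a * hr r v + b * hv r v)) (at (r,v))"
proof -
  have fx: "((\<lambda>s. h s v) has_derivative (\<lambda>a. a * hr r v)) (at r within UNIV)"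
  proof -
    have "(\<lambda>a. a * hr r v) = (*) (hr r v)" by (auto simp: mult.commute)
    then show ?thesis using hr[where r=r and v=v] unfolding has_field_derivative_def by simp
  qed
  have fy: "((\<lambda>w. h x w) has_derivative blinfun_apply (blinfun_mult_left (hv x y))) (at y within UNIV)" for x y
  proof -
    have "blinfun_apply (blinfun_mult_left (hv x y)) = (*) (hv x y)" by (auto simp: mult.commute)
    then show ?thesis using hv[where r=x and v=y] unfolding has_field_derivative_def by simp
  qed
  have c0: "continuous (at (r, v) within UNIV \<times> UNIV) (\<lambda>(x, y). hv x y)"
    using cv by (simp add: continuous_on_eq_continuous_within)
  have c1: "continuous (at (r, v) within UNIV \<times> UNIV) (\<lambda>(x, y). blinfun_mult_left (hv x y))"
  proof -
    have "continuous (at (r, v) within UNIV \<times> UNIV) (\<lambda>p. blinfun_mult_left ((\<lambda>(x, y). hv x y) p))"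
      by (rule bounded_linear.continuous[OF bounded_linear_blinfun_mult_left c0])
    then show ?thesis by (simp add: case_prod_beta')
  qed
  have "((\<lambda>(x, y). h x y) has_derivative (\<lambda>(tx, ty). tx * hr r v + blinfun_apply (blinfun_mult_left (hv r v)) ty))
      (at (r, v) within UNIV \<times> UNIV)"
    by (rule has_derivative_partialsI[OF fx fy c1]) auto
  then show ?thesis by simp
qed

lemma chain2:
  fixes h hr hv :: "real \<Rightarrow> real \<Rightarrow> real" and p q :: "real \<Rightarrow> real"
  assumes hr: "\<And>r v. ((\<lambda>s. h s v) has_real_derivative hr r v) (at r)"
    and hv: "\<And>r v. ((\<lambda>w. h r w) has_real_derivative hv r v) (at v)"
    and cv: "continuous_on UNIV (\<lambda>(r,v). hv r v)"
    and p: "(p has_real_derivative p') (at x within S)"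
    and q: "(q has_real_derivative q') (at x within S)"
  shows "((\<lambda>y. h (p y) (q y)) has_real_derivative (p' * hr (p x) (q x) + q' * hv (p x) (q x))) (at x within S)"
proof -
  have pq: "((\<lambda>y. (p y, q y)) has_derivative (\<lambda>d. (p' * d, q' * d))) (at x within S)"
    using p q unfolding has_field_derivative_def by (intro has_derivative_Pair)
  have "((\<lambda>y. (\<lambda>(r,v). h r v) (p y, q y)) has_derivative
        (\<lambda>d. (\<lambda>(a,b). a * hr (p x) (q x) + b * hv (p x) (q x)) (p' * d, q' * d))) (at x within S)"
    by (rule has_derivative_compose[OF pq frechet2[OF hr hv cv]])
  moreover have "(\<lambda>d. (\<lambda>(a,b). a * hr (p x) (q x) + b * hv (p x) (q x)) (p' * d, q' * d))
      = (*) (p' * hr (p x) (q x) + q' * hv (p x) (q x))"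
    by (auto simp: algebra_simps)
  ultimately show ?thesis unfolding has_field_derivative_def by simp
qed

definition smoothD :: "(nat \<Rightarrow> nat \<Rightarrow> real \<Rightarrow> real \<Rightarrow> real) \<Rightarrow> bool" where
  "smoothD D \<longleftrightarrow> (\<forall>i j. continuous_on UNIV (\<lambda>(r,v). D i j r v) \<and>
        (\<forall>r v. ((\<lambda>s. D i j s v) has_real_derivative D (Suc i) j r v) (at r) \<and>
               ((\<lambda>w. D i j r w) has_real_derivative D i (Suc j) r v) (at v)))"

lemma smooth2_D: "smooth2 f \<Longrightarrow> \<exists>D. D 0 0 = f \<and> smoothD D"
  unfolding smooth2_def smoothD_def by blast

lemma chainD:
  assumes "smoothD D"
    and p: "(p has_real_derivative p') (at x within S)"
    and q: "(q has_real_derivative q') (at x within S)"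
  shows "((\<lambda>y. D i j (p y) (q y)) has_real_derivative
            (p' * D (Suc i) j (p x) (q x) + q' * D i (Suc j) (p x) (q x))) (at x within S)"
  using assms unfolding smoothD_def by (intro chain2) auto

lemma D_r: "smoothD D \<Longrightarrow> ((\<lambda>s. D i j s v) has_real_derivative D (Suc i) j r v) (at r)"
  unfolding smoothD_def by blast
lemma D_v: "smoothD D \<Longrightarrow> ((\<lambda>w. D i j r w) has_real_derivative D i (Suc j) r v) (at v)"
  unfolding smoothD_def by blast
lemma D_cont: "smoothD D \<Longrightarrow> continuous_on UNIV (\<lambda>(r,v). D i j r v)"
  unfolding smoothD_def by blast

lemma D_bounded:
  assumes "smoothD D"
  shows "\<exists>C. \<forall>r v. \<bar>r\<bar> \<le> B \<longrightarrow> \<bar>v\<bar> \<le> B \<longrightarrow> \<bar>D i j r v\<bar> \<le> C"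
proof -
  have "compact ((\<lambda>(r,v). D i j r v) ` cbox (-B, -B) (B, B))"
    by (rule compact_continuous_image[OF continuous_on_subset[OF D_cont[OF assms] subset_UNIV]]) (rule compact_cbox)
  then have "bounded ((\<lambda>(r,v). D i j r v) ` cbox (-B, -B) (B, B))" by (rule compact_imp_bounded)
  then obtain C where C: "\<And>z. z \<in> (\<lambda>(r,v). D i j r v) ` cbox (-B, -B) (B, B) \<Longrightarrow> norm z \<le> C"
    unfolding bounded_iff by blast
  show ?thesis
  proof (intro exI allI impI)
    fix r v :: real assume "\<bar>r\<bar> \<le> B" "\<bar>v\<bar> \<le> B"
    then have "(r, v) \<in> cbox (-B, -B) (B, B)" by (auto simp: cbox_Pair_iff)
    then show "\<bar>D i j r v\<bar> \<le> C" using C[of "D i j r v"] by force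
  qed
qed


lemma C1_parts:
  fixes g :: "real \<Rightarrow> real \<Rightarrow> real" and T :: real
  assumes "C1_on ({0..<T} \<times> UNIV) g"
  obtains gt gx where
    "continuous_on ({0..<T}\<times>UNIV) (\<lambda>(t,x). gt t x)"
    "continuous_on ({0..<T}\<times>UNIV) (\<lambda>(t,x). gx t x)"
    "continuous_on ({0..<T}\<times>UNIV) (\<lambda>(t,x). g t x)"
    "\<And>t x. 0 \<le> t \<Longrightarrow> t < T \<Longrightarrow> ((\<lambda>y. g t y) has_real_derivative gx t x) (at x)"
    "\<And>t x. 0 < t \<Longrightarrow> t < T \<Longrightarrow> ((\<lambda>s. g s x) has_real_derivative gt t x) (at t)"
proof -
  let ?S = "{0..<T} \<times> (UNIV::real set)"
  obtain gt gx where c1: "continuous_on ?S (\<lambda>(t,x). gt t x)" and c2: "continuous_on ?S (\<lambda>(t,x). gx t x)"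
    and der0: "\<forall>(t,x)\<in>?S. ((\<lambda>(s,y). g s y) has_derivative (\<lambda>(a,b). a * gt t x + b * gx t x)) (at (t,x) within ?S)"
    using assms unfolding C1_on_def by blast
  have der: "((\<lambda>(s,y). g s y) has_derivative (\<lambda>(a,b). a * gt (fst p) (snd p) + b * gx (fst p) (snd p))) (at p within ?S)"
    if "p \<in> ?S" for p
    using der0 that by (cases p) auto
  have c3: "continuous_on ?S (\<lambda>(t,x). g t x)"
    unfolding continuous_on_eq_continuous_within
    using der has_derivative_continuous by blast
  have dx: "((\<lambda>y. g t y) has_real_derivative gx t x) (at x)" if "0 \<le> t" "t < T" for t x
  proof -
    have f: "((\<lambda>y. (t, y)) has_derivative (\<lambda>b. (0, b))) (at x within UNIV)"
      by (auto intro!: derivative_eq_intros)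
    have "((\<lambda>y. (\<lambda>(s,y). g s y) (t, y)) has_derivative
       (\<lambda>b. (\<lambda>(a,b). a * gt (fst (t,x)) (snd (t,x)) + b * gx (fst (t,x)) (snd (t,x))) (0, b))) (at x within UNIV)"
      by (rule has_derivative_in_compose2[OF der _ _ f]) (use that in auto)
    moreover have "(\<lambda>b. (\<lambda>(a,b). a * gt (fst (t,x)) (snd (t,x)) + b * gx (fst (t,x)) (snd (t,x))) (0, b)) = (*) (gx t x)"
      by (auto simp: mult.commute)
    ultimately show ?thesis unfolding has_field_derivative_def by simp
  qed
  have dt: "((\<lambda>s. g s x) has_real_derivative gt t x) (at t)" if "0 < t" "t < T" for t x
  proof -
    have "(t, x) \<in> interior ?S"
    proof -
      have "open ({0<..<T} \<times> (UNIV::real set))" by (intro open_Times) auto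
      moreover have "{0<..<T} \<times> (UNIV::real set) \<subseteq> ?S" by auto
      ultimately have "{0<..<T} \<times> (UNIV::real set) \<subseteq> interior ?S" by (rule interior_maximal[rotated])
      then show ?thesis using that by auto
    qed
    then have at: "at (t, x) within ?S = at (t, x)" by (rule at_within_interior)
    have f: "((\<lambda>s. (s, x)) has_derivative (\<lambda>a. (a, 0))) (at t)"
      by (auto intro!: derivative_eq_intros)
    have "((\<lambda>(s,y). g s y) has_derivative (\<lambda>(a,b). a * gt t x + b * gx t x)) (at (t, x))"
      using der[of "(t,x)"] that at by auto
    from has_derivative_compose[OF f this]
    have "((\<lambda>s. g s x) has_derivative (\<lambda>a. a * gt t x)) (at t)" by simp
    moreover have "(\<lambda>a. a * gt t x) = (*) (gt t x)" by (auto simp: mult.commute)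
    ultimately show ?thesis unfolding has_field_derivative_def by simp
  qed
  show ?thesis using that c1 c2 c3 dx dt by blast
qed

lemma cont_pointwise:
  fixes G :: "real \<Rightarrow> real \<Rightarrow> real" and T t x :: real
  assumes "continuous_on ({0..<T}\<times>UNIV) (\<lambda>(s,y). G s y)" "0 < t" "t < T"
  shows "\<forall>e>0. \<exists>\<delta>>0. \<forall>s y. \<bar>s - t\<bar> < \<delta> \<longrightarrow> \<bar>y - x\<bar> < \<delta> \<longrightarrow> \<bar>G s y - G t x\<bar> < e"
proof (intro allI impI)
  fix e :: real assume e: "e > 0"
  have "(t,x) \<in> {0..<T}\<times>(UNIV::real set)" using assms by auto
  with assms(1) e obtain d where d: "d > 0"
    and dd: "\<And>p. p \<in> {0..<T}\<times>UNIV \<Longrightarrow> dist p (t,x) < d \<Longrightarrow> dist ((\<lambda>(s,y). G s y) p) ((\<lambda>(s,y). G s y) (t,x)) < e"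
    unfolding continuous_on_iff by metis
  define \<delta> where "\<delta> = min (d/2) t"
  show "\<exists>\<delta>>0. \<forall>s y. \<bar>s - t\<bar> < \<delta> \<longrightarrow> \<bar>y - x\<bar> < \<delta> \<longrightarrow> \<bar>G s y - G t x\<bar> < e"
  proof (intro exI[of _ "min (min (d/2) t) (T - t)"] conjI allI impI)
    show "0 < min (min (d/2) t) (T - t)" using d assms by auto
    fix s y assume s: "\<bar>s - t\<bar> < min (min (d/2) t) (T - t)" and y: "\<bar>y - x\<bar> < min (min (d/2) t) (T - t)"
    have "dist (s,y) (t,x) \<le> dist s t + dist y x" unfolding dist_Pair_Pair using sqrt_sum_squares_le_sum_abs[of "dist s t" "dist y x"] by simp
    also have "\<dots> < d" using s y by (auto simp: dist_real_def)
    finally have "dist (s,y) (t,x) < d" .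
    moreover have "(s,y) \<in> {0..<T}\<times>UNIV" using s by auto
    ultimately show "\<bar>G s y - G t x\<bar> < e" using dd[of "(s,y)"] by (auto simp: dist_real_def)
  qed
qed


lemma first_touch:
  fixes W :: "real \<Rightarrow> real \<Rightarrow> real" and t1 R :: real
  assumes t1: "0 < t1"
    and cW: "continuous_on ({0..t1}\<times>UNIV) (\<lambda>(s,y). W s y)"
    and W0: "\<And>x. W 0 x > 0"
    and coer: "\<And>s x. s \<in> {0..t1} \<Longrightarrow> \<bar>x\<bar> \<ge> R \<Longrightarrow> W s x > 0"
    and neg: "s0 \<in> {0..t1}" "W s0 x0 \<le> 0"
  shows "\<exists>s x. 0 < s \<and> s \<le> t1 \<and> W s x = 0 \<and> (\<forall>s'\<in>{0..<s}. \<forall>y. W s' y > 0) \<and> (\<forall>y. W s y \<ge> 0)"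
proof -
  let ?K = "({0..t1} \<times> {-R..R}) \<inter> (\<lambda>(s,y). W s y) -` {..0}"
  have cK: "closed ?K"
    by (rule continuous_closed_preimage) (auto intro: continuous_on_subset[OF cW] closed_Times)
  have cb: "compact ({0..t1} \<times> {-R..R})" by (auto intro!: compact_Times)
  have "compact (({0..t1} \<times> {-R..R}) \<inter> ?K)" by (rule compact_Int_closed[OF cb cK])
  moreover have "({0..t1} \<times> {-R..R}) \<inter> ?K = ?K" by blast
  ultimately have "compact ?K" by simp
  then have cF: "compact (fst ` ?K)" by (intro compact_continuous_image continuous_intros)
  have "\<bar>x0\<bar> < R" using neg coer[of s0 x0] by force
  then have "(s0, x0) \<in> ?K" using neg by auto
  then have ne: "fst ` ?K \<noteq> {}" by blast
  obtain m where m: "m \<in> fst ` ?K" and mmin: "\<And>z. z \<in> fst ` ?K \<Longrightarrow> m \<le> z"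
    using compact_attains_inf[OF cF ne] by blast
  then obtain x where mx: "(m, x) \<in> ?K" by force
  then have m01: "m \<in> {0..t1}" and Wmx: "W m x \<le> 0" by auto
  have before: "W s' y > 0" if "s' \<in> {0..<m}" for s' y
  proof (rule ccontr)
    assume "\<not> W s' y > 0"
    then have "W s' y \<le> 0" by simp
    moreover have s'': "s' \<in> {0..t1}" using that m01 by auto
    ultimately have "\<bar>y\<bar> \<le> R" using coer[of s' y] by force
    then have "(s', y) \<in> ?K" using s'' \<open>W s' y \<le> 0\<close> by auto
    then have "m \<le> s'" using mmin by force
    then show False using that by auto
  qed
  have m0: "0 < m"
  proof (rule ccontr)
    assume "\<not> 0 < m" then have "m = 0" using m01 by auto
    then show False using Wmx W0[of x] by auto
  qed
  have atm: "W m y \<ge> 0" for y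
  proof (rule ccontr)
    assume "\<not> W m y \<ge> 0"
    then have neg: "W m y < 0" by simp
    have "(m, y) \<in> {0..t1}\<times>(UNIV::real set)" using m01 by auto
    with cW obtain d where d: "d > 0" and dd: "\<And>p. p \<in> {0..t1}\<times>UNIV \<Longrightarrow> dist p (m,y) < d \<Longrightarrow>
        dist ((\<lambda>(s,y). W s y) p) ((\<lambda>(s,y). W s y) (m,y)) < - W m y"
      unfolding continuous_on_iff using neg by (metis neg_0_less_iff_less)
    define s' where "s' = max 0 (m - d/2)"
    have s': "s' \<in> {0..<m}" "s' \<in> {0..t1}" using m0 d m01 by (auto simp: s'_def)
    have "dist (s', y) (m, y) < d" using d m0 by (auto simp: s'_def dist_Pair_Pair dist_real_def)
    then have "dist (W s' y) (W m y) < - W m y" using dd[of "(s',y)"] s' by auto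
    then have "W s' y < 0" by (auto simp: dist_real_def)
    with before[OF s'(1), of y] show False by simp
  qed
  have "W m x = 0" using Wmx atm[of x] by simp
  then show ?thesis using m0 m01 before atm by (intro exI[of _ m] exI[of _ x]) auto
qed

definition psi :: "real \<Rightarrow> real \<Rightarrow> real \<Rightarrow> real" where
  "psi L s x = exp (L * s) * sqrt (1 + x^2)"
definition psix :: "real \<Rightarrow> real \<Rightarrow> real \<Rightarrow> real" where
  "psix L s x = exp (L * s) * (x / sqrt (1 + x^2))"

lemma psi_pos: "psi L s x > 0" unfolding psi_def by (simp add: add_pos_nonneg)

lemma psix_le: "\<bar>psix L s x\<bar> \<le> psi L s x"
proof -
  have p: "0 < sqrt (1 + x^2)" by (simp add: add_pos_nonneg)
  have h1: "(\<bar>x\<bar> - 1)^2 = x^2 - 2*\<bar>x\<bar> + 1" by (simp add: power2_eq_square algebra_simps abs_mult_self_eq)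
  have "0 \<le> (\<bar>x\<bar> - 1)^2" by simp
  then have "\<bar>x\<bar> \<le> 1 + x^2" using h1 zero_le_power2[of x] by linarith
  then have "\<bar>x\<bar> \<le> sqrt (1 + x^2) * sqrt (1 + x^2)" by (simp add: add_nonneg_nonneg)
  then have "\<bar>x\<bar> / sqrt (1 + x^2) \<le> sqrt (1 + x^2)" using p by (simp add: divide_le_eq)
  then have "exp (L * s) * (\<bar>x\<bar> / sqrt (1 + x^2)) \<le> exp (L * s) * sqrt (1 + x^2)"
    by (intro mult_left_mono) auto
  then show ?thesis unfolding psi_def psix_def using p by (simp add: abs_mult)
qed

lemma psi_dx: "((\<lambda>y. psi L s y) has_real_derivative psix L s x) (at x)"
proof -
  have p: "0 < 1 + x^2" by (simp add: add_pos_nonneg)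
  have d1: "((\<lambda>y. 1 + y^2) has_real_derivative 2 * x) (at x)"
    using DERIV_add[OF DERIV_const[of 1] DERIV_pow[of 2 x]] by simp
  have d2: "((\<lambda>y. sqrt (1 + y^2)) has_real_derivative inverse (sqrt (1 + x^2)) / 2 * (2 * x)) (at x)"
    by (rule DERIV_chain2[OF DERIV_real_sqrt[OF p] d1])
  have d3: "((\<lambda>y. exp (L * s) * sqrt (1 + y^2)) has_real_derivative exp (L * s) * (inverse (sqrt (1 + x^2)) / 2 * (2 * x))) (at x)"
    by (rule DERIV_cmult[OF d2])
  moreover have "exp (L * s) * (inverse (sqrt (1 + x^2)) / 2 * (2 * x)) = psix L s x"
    unfolding psix_def by (simp add: field_simps)
  ultimately show ?thesis unfolding psi_def by simp
qed

lemma psi_dt: "((\<lambda>s. psi L s x) has_real_derivative L * psi L s x) (at s)"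
proof -
  have "((\<lambda>s. exp (L * s)) has_real_derivative exp (L * s) * L) (at s)"
    using DERIV_chain2[OF DERIV_exp DERIV_cmult[OF DERIV_ident, of L]] by simp
  from DERIV_mult[OF this DERIV_const[of "sqrt (1 + x^2)"]]
  show ?thesis unfolding psi_def by (simp add: algebra_simps)
qed

lemma psi_cont: "continuous_on S (\<lambda>(s,y). psi L s y)"
proof -
  have "continuous_on S (\<lambda>p. exp (L * fst p) * sqrt (1 + (snd p)^2))"
    by (intro continuous_intros)
  then show ?thesis unfolding psi_def by (simp add: case_prod_beta')
qed

lemma psi_ge: "psi L s x \<ge> exp (L * s) * \<bar>x\<bar>"
  unfolding psi_def by (intro mult_left_mono) (auto simp: real_le_rsqrt)


lemma touch_derivs:
  fixes F :: "real \<Rightarrow> real \<Rightarrow> real"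
  assumes m: "0 < m" and z: "F m x = 0" and ge: "\<And>y. F m y \<ge> 0"
    and bef: "\<And>s. 0 \<le> s \<Longrightarrow> s < m \<Longrightarrow> F s x > 0"
    and da: "((\<lambda>y. F m y) has_real_derivative a) (at x)"
    and db: "((\<lambda>s. F s x) has_real_derivative b) (at m)"
  shows "a = 0" "b \<le> 0"
proof -
  show "a = 0"
    by (rule DERIV_local_min[OF da, of 1]) (use z ge in auto)
  show "b \<le> 0"
  proof (rule ccontr)
    assume "\<not> b \<le> 0" then have "0 < b" by simp
    from DERIV_pos_inc_left[OF db this] obtain d where d: "d > 0"
      and dd: "\<And>h. h > 0 \<Longrightarrow> h < d \<Longrightarrow> F (m - h) x < F m x" by blast
    define h where "h = min d m / 2"
    have "h > 0" "h < d" "h \<le> m" using d m by (auto simp: h_def)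
    then have "F (m - h) x < 0" using dd[of h] z by simp
    moreover have "F (m - h) x > 0" using bef[of "m - h"] \<open>h > 0\<close> \<open>h \<le> m\<close> by simp
    ultimately show False by simp
  qed
qed

lemma mp2:
  fixes A1 A2 A1x A1t A2x A2t :: "real \<Rightarrow> real \<Rightarrow> real" and t1 B L :: real
  assumes t1: "0 < t1"
    and c1: "continuous_on ({0..t1}\<times>UNIV) (\<lambda>(s,y). A1 s y)"
    and c2: "continuous_on ({0..t1}\<times>UNIV) (\<lambda>(s,y). A2 s y)"
    and bnd: "\<And>s x. s \<in> {0..t1} \<Longrightarrow> \<bar>A1 s x\<bar> \<le> B \<and> \<bar>A2 s x\<bar> \<le> B"
    and init: "\<And>x. A1 0 x \<ge> 0 \<and> A2 0 x \<ge> 0"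
    and d1x: "\<And>s x. 0 < s \<Longrightarrow> s \<le> t1 \<Longrightarrow> ((\<lambda>y. A1 s y) has_real_derivative A1x s x) (at x)"
    and d1t: "\<And>s x. 0 < s \<Longrightarrow> s \<le> t1 \<Longrightarrow> ((\<lambda>s'. A1 s' x) has_real_derivative A1t s x) (at s)"
    and d2x: "\<And>s x. 0 < s \<Longrightarrow> s \<le> t1 \<Longrightarrow> ((\<lambda>y. A2 s y) has_real_derivative A2x s x) (at x)"
    and d2t: "\<And>s x. 0 < s \<Longrightarrow> s \<le> t1 \<Longrightarrow> ((\<lambda>s'. A2 s' x) has_real_derivative A2t s x) (at s)"
    and step1: "\<And>s x \<epsilon>. 0 < s \<Longrightarrow> s \<le> t1 \<Longrightarrow> 0 < \<epsilon> \<Longrightarrow> A1 s x = - \<epsilon> * psi L s x \<Longrightarrow>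
        A2 s x \<ge> - \<epsilon> * psi L s x \<Longrightarrow> A1x s x = - \<epsilon> * psix L s x \<Longrightarrow>
        A1t s x \<le> - \<epsilon> * (L * psi L s x) \<Longrightarrow> False"
    and step2: "\<And>s x \<epsilon>. 0 < s \<Longrightarrow> s \<le> t1 \<Longrightarrow> 0 < \<epsilon> \<Longrightarrow> A2 s x = - \<epsilon> * psi L s x \<Longrightarrow>
        A1 s x \<ge> - \<epsilon> * psi L s x \<Longrightarrow> A2x s x = - \<epsilon> * psix L s x \<Longrightarrow>
        A2t s x \<le> - \<epsilon> * (L * psi L s x) \<Longrightarrow> False"
  shows "\<forall>s\<in>{0..t1}. \<forall>x. A1 s x \<ge> 0 \<and> A2 s x \<ge> 0"
proof (rule ccontr)
  assume "\<not> ?thesis"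
  then obtain s0 x0 where s0: "s0 \<in> {0..t1}" and neg0: "A1 s0 x0 < 0 \<or> A2 s0 x0 < 0"
    by (meson not_le)
  have neg: "min (A1 s0 x0) (A2 s0 x0) < 0" using neg0 by (simp add: min_less_iff_disj)
  define a where "a = min (A1 s0 x0) (A2 s0 x0)"
  have a: "a < 0" using neg by (simp add: a_def)
  define \<epsilon> where "\<epsilon> = - a / (2 * psi L s0 x0)"
  have ps0: "psi L s0 x0 > 0" by (rule psi_pos)
  have \<epsilon>: "\<epsilon> > 0" using a ps0 unfolding \<epsilon>_def by (intro divide_pos_pos) auto
  have \<epsilon>psi: "\<epsilon> * psi L s0 x0 = - a / 2" using ps0 by (simp add: \<epsilon>_def)
  define W where "W s y = min (A1 s y + \<epsilon> * psi L s y) (A2 s y + \<epsilon> * psi L s y)" for s y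
  have c1': "continuous_on ({0..t1}\<times>UNIV) (\<lambda>p. A1 (fst p) (snd p))" using c1 by (simp add: case_prod_beta')
  have c2': "continuous_on ({0..t1}\<times>UNIV) (\<lambda>p. A2 (fst p) (snd p))" using c2 by (simp add: case_prod_beta')
  have cp: "continuous_on ({0..t1}\<times>UNIV) (\<lambda>p. psi L (fst p) (snd p))" using psi_cont by (simp add: case_prod_beta')
  have cW: "continuous_on ({0..t1}\<times>UNIV) (\<lambda>(s,y). W s y)"
    unfolding W_def case_prod_beta'
    by (intro continuous_on_min continuous_on_add continuous_on_mult continuous_on_const c1' c2' cp)
  define c where "c = exp (- \<bar>L\<bar> * t1)"
  have c: "c > 0" by (simp add: c_def)
  have expc: "exp (L * s) \<ge> c" if "s \<in> {0..t1}" for s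
  proof -
    have "- \<bar>L\<bar> * t1 \<le> L * s"
    proof -
      have "\<bar>L * s\<bar> \<le> \<bar>L\<bar> * t1" using that by (auto simp: abs_mult intro: mult_left_mono)
      then show ?thesis by linarith
    qed
    then show ?thesis unfolding c_def by simp
  qed
  define R where "R = (B + 1) / (\<epsilon> * c)"
  have coer: "W s x > 0" if s: "s \<in> {0..t1}" and x: "\<bar>x\<bar> \<ge> R" for s x
  proof -
    have "\<epsilon> * c * \<bar>x\<bar> \<ge> \<epsilon> * c * R" using x \<epsilon> c by (intro mult_left_mono) auto
    also have "\<epsilon> * c * R = B + 1" using \<epsilon> c by (simp add: R_def)
    finally have 1: "\<epsilon> * c * \<bar>x\<bar> \<ge> B + 1" .
    have "psi L s x \<ge> c * \<bar>x\<bar>"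
      using psi_ge[of L s x] expc[OF s] by (meson abs_ge_zero mult_right_mono order_trans)
    then have "\<epsilon> * psi L s x \<ge> \<epsilon> * c * \<bar>x\<bar>" using \<epsilon> by (simp add: mult.assoc mult_left_mono)
    with 1 have "\<epsilon> * psi L s x \<ge> B + 1" by simp
    then show ?thesis using bnd[OF s, of x] unfolding W_def by auto
  qed
  have W0: "W 0 x > 0" for x
    using init[of x] psi_pos[of L 0 x] \<epsilon> unfolding W_def by (simp add: add_nonneg_pos)
  have Wneg: "W s0 x0 \<le> 0" using \<epsilon>psi a unfolding W_def a_def by (auto simp: min_def)
  obtain m x where m: "0 < m" "m \<le> t1" and Wz: "W m x = 0"
    and bef: "\<forall>s'\<in>{0..<m}. \<forall>y. W s' y > 0" and atm: "\<forall>y. W m y \<ge> 0"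
    using first_touch[OF t1 cW W0 coer s0 Wneg] by blast
  have dpx: "((\<lambda>y. psi L m y) has_real_derivative psix L m x) (at x)" by (rule psi_dx)
  have dpt: "((\<lambda>s. psi L s x) has_real_derivative L * psi L m x) (at m)" by (rule psi_dt)
  show False
  proof (cases "A1 m x + \<epsilon> * psi L m x = 0")
    case True
    let ?F = "\<lambda>s y. A1 s y + \<epsilon> * psi L s y"
    have td: "A1x m x + \<epsilon> * psix L m x = 0" "A1t m x + \<epsilon> * (L * psi L m x) \<le> 0"
    proof -
      have da: "((\<lambda>y. ?F m y) has_real_derivative A1x m x + \<epsilon> * psix L m x) (at x)"
        by (intro DERIV_add DERIV_cmult d1x dpx m)
      have db: "((\<lambda>s. ?F s x) has_real_derivative A1t m x + \<epsilon> * (L * psi L m x)) (at m)"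
        by (intro DERIV_add DERIV_cmult d1t dpt m)
      have ge: "?F m y \<ge> 0" for y using atm[rule_format, of y] unfolding W_def by simp
      have bf: "?F s x > 0" if "0 \<le> s" "s < m" for s using bef that unfolding W_def by auto
      show "A1x m x + \<epsilon> * psix L m x = 0" "A1t m x + \<epsilon> * (L * psi L m x) \<le> 0"
        using touch_derivs[of m ?F x, OF m(1) True ge bf da db] by auto
    qed
    have "A2 m x + \<epsilon> * psi L m x \<ge> 0" using Wz unfolding W_def by simp
    then show False using step1[OF m \<epsilon>, of x] True td by (simp add: algebra_simps)
  next
    case False
    then have True: "A2 m x + \<epsilon> * psi L m x = 0" using Wz unfolding W_def by (auto simp: min_def split: if_splits)
    let ?F = "\<lambda>s y. A2 s y + \<epsilon> * psi L s y"
    have td: "A2x m x + \<epsilon> * psix L m x = 0" "A2t m x + \<epsilon> * (L * psi L m x) \<le> 0"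
    proof -
      have da: "((\<lambda>y. ?F m y) has_real_derivative A2x m x + \<epsilon> * psix L m x) (at x)"
        by (intro DERIV_add DERIV_cmult d2x dpx m)
      have db: "((\<lambda>s. ?F s x) has_real_derivative A2t m x + \<epsilon> * (L * psi L m x)) (at m)"
        by (intro DERIV_add DERIV_cmult d2t dpt m)
      have ge: "?F m y \<ge> 0" for y using atm[rule_format, of y] unfolding W_def by simp
      have bf: "?F s x > 0" if "0 \<le> s" "s < m" for s using bef that unfolding W_def by auto
      show "A2x m x + \<epsilon> * psix L m x = 0" "A2t m x + \<epsilon> * (L * psi L m x) \<le> 0"
        using touch_derivs[of m ?F x, OF m(1) True ge bf da db] by auto
    qed
    have "A1 m x + \<epsilon> * psi L m x \<ge> 0" using Wz unfolding W_def by simp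
    then show False using step2[OF m \<epsilon>, of x] True td by (simp add: algebra_simps)
  qed
qed


abbreviation cont2 :: "(real \<times> real) set \<Rightarrow> (real \<Rightarrow> real \<Rightarrow> real) \<Rightarrow> bool" where
  "cont2 S X \<equiv> continuous_on S (\<lambda>p. X (fst p) (snd p))"

lemma cont2_iff: "continuous_on S (\<lambda>(t,x). X t x) \<longleftrightarrow> cont2 S X"
  by (simp add: case_prod_beta')

lemma C1_pxpt:
  fixes g :: "real \<Rightarrow> real \<Rightarrow> real"
  assumes "C1_on ({0..<T} \<times> UNIV) g"
  shows "cont2 ({0..<T}\<times>UNIV) g"
   "cont2 ({0..<T}\<times>UNIV) (px g)"
   "cont2 ({0<..<T}\<times>UNIV) (pt g)"
   "\<And>t x. 0 \<le> t \<Longrightarrow> t < T \<Longrightarrow> ((\<lambda>y. g t y) has_real_derivative px g t x) (at x)"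
   "\<And>t x. 0 < t \<Longrightarrow> t < T \<Longrightarrow> ((\<lambda>s. g s x) has_real_derivative pt g t x) (at t)"
proof -
  obtain gt gx where c1: "continuous_on ({0..<T}\<times>UNIV) (\<lambda>(t,x). gt t x)"
    and c2: "continuous_on ({0..<T}\<times>UNIV) (\<lambda>(t,x). gx t x)"
    and c3: "continuous_on ({0..<T}\<times>UNIV) (\<lambda>(t,x). g t x)"
    and dx: "\<And>t x. 0 \<le> t \<Longrightarrow> t < T \<Longrightarrow> ((\<lambda>y. g t y) has_real_derivative gx t x) (at x)"
    and dt: "\<And>t x. 0 < t \<Longrightarrow> t < T \<Longrightarrow> ((\<lambda>s. g s x) has_real_derivative gt t x) (at t)"
    by (rule C1_parts[OF assms]) blast
  have ex: "px g t x = gx t x" if "0 \<le> t" "t < T" for t x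
    unfolding px_def using dx[OF that] by (rule DERIV_imp_deriv)
  have et: "pt g t x = gt t x" if "0 < t" "t < T" for t x
    unfolding pt_def using dt[OF that] by (rule DERIV_imp_deriv)
  show "cont2 ({0..<T}\<times>UNIV) g" using c3 by (simp add: case_prod_beta')
  show "cont2 ({0..<T}\<times>UNIV) (px g)"
    using c2 by (simp add: case_prod_beta') (rule continuous_on_cong[THEN iffD1, OF refl _ c2[unfolded case_prod_beta']], auto simp: ex)
  have "continuous_on ({0<..<T}\<times>UNIV) (\<lambda>p. gt (fst p) (snd p))"
    by (rule continuous_on_subset[OF c1[unfolded case_prod_beta']]) auto
  then show "cont2 ({0<..<T}\<times>UNIV) (pt g)"
    by (rule continuous_on_cong[THEN iffD1, OF refl, rotated]) (auto simp: et)
  show "\<And>t x. 0 \<le> t \<Longrightarrow> t < T \<Longrightarrow> ((\<lambda>y. g t y) has_real_derivative px g t x) (at x)"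
    using dx ex by simp
  show "\<And>t x. 0 < t \<Longrightarrow> t < T \<Longrightarrow> ((\<lambda>s. g s x) has_real_derivative pt g t x) (at t)"
    using dt et by simp
qed

lemma cont_pointwise':
  fixes G :: "real \<Rightarrow> real \<Rightarrow> real" and T t x :: real
  assumes "cont2 ({0<..<T}\<times>UNIV) G" "0 < t" "t < T"
  shows "\<forall>e>0. \<exists>\<delta>>0. \<forall>s y. \<bar>s - t\<bar> < \<delta> \<longrightarrow> \<bar>y - x\<bar> < \<delta> \<longrightarrow> \<bar>G s y - G t x\<bar> < e"
proof (intro allI impI)
  fix e :: real assume e: "e > 0"
  have "(t,x) \<in> {0<..<T}\<times>(UNIV::real set)" using assms by auto
  with assms(1) e obtain d where d: "d > 0"
    and dd: "\<And>p. p \<in> {0<..<T}\<times>UNIV \<Longrightarrow> dist p (t,x) < d \<Longrightarrow> dist (G (fst p) (snd p)) (G t x) < e"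
    unfolding continuous_on_iff by (metis fst_conv snd_conv)
  show "\<exists>\<delta>>0. \<forall>s y. \<bar>s - t\<bar> < \<delta> \<longrightarrow> \<bar>y - x\<bar> < \<delta> \<longrightarrow> \<bar>G s y - G t x\<bar> < e"
  proof (intro exI[of _ "min (min (d/2) t) (T - t)"] conjI allI impI)
    show "0 < min (min (d/2) t) (T - t)" using d assms by auto
    fix s y assume s: "\<bar>s - t\<bar> < min (min (d/2) t) (T - t)" and y: "\<bar>y - x\<bar> < min (min (d/2) t) (T - t)"
    have "dist (s,y) (t,x) \<le> dist s t + dist y x" unfolding dist_Pair_Pair using sqrt_sum_squares_le_sum_abs[of "dist s t" "dist y x"] by simp
    also have "\<dots> < d" using s y by (auto simp: dist_real_def)
    finally have "dist (s,y) (t,x) < d" .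
    moreover have "(s,y) \<in> {0<..<T}\<times>UNIV" using s by auto
    ultimately show "\<bar>G s y - G t x\<bar> < e" using dd[of "(s,y)"] by (auto simp: dist_real_def)
  qed
qed

lemma schwarz':
  fixes F Ft Fx G :: "real \<Rightarrow> real \<Rightarrow> real"
  assumes d0: "0 < d"
    and Ft: "\<And>s y. \<bar>s - t\<bar> < d \<Longrightarrow> \<bar>y - x\<bar> < d \<Longrightarrow> ((\<lambda>s'. F s' y) has_real_derivative Ft s y) (at s)"
    and Fx: "\<And>s y. \<bar>s - t\<bar> < d \<Longrightarrow> \<bar>y - x\<bar> < d \<Longrightarrow> ((\<lambda>y'. F s y') has_real_derivative Fx s y) (at y)"
    and G: "\<And>s y. \<bar>s - t\<bar> < d \<Longrightarrow> \<bar>y - x\<bar> < d \<Longrightarrow> ((\<lambda>y'. Ft s y') has_real_derivative G s y) (at y)"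
    and Gc: "\<forall>e>0. \<exists>\<delta>>0. \<forall>s y. \<bar>s - t\<bar> < \<delta> \<longrightarrow> \<bar>y - x\<bar> < \<delta> \<longrightarrow> \<bar>G s y - G t x\<bar> < e"
  shows "((\<lambda>s. Fx s x) has_real_derivative G t x) (at t)"
proof -
  have "((\<lambda>y. (\<lambda>a b. Fx b a) x y) has_real_derivative (\<lambda>a b. G b a) x t) (at t)"
  proof (rule schwarz[of d x t "\<lambda>a b. F b a"])
    show "0 < d" by fact
    show "((\<lambda>s'. F y s') has_real_derivative Fx y s) (at s)" if "\<bar>s - x\<bar> < d" "\<bar>y - t\<bar> < d" for s y
      using Fx that by simp
    show "((\<lambda>y'. F y' s) has_real_derivative Ft y s) (at y)" if "\<bar>s - x\<bar> < d" "\<bar>y - t\<bar> < d" for s y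
      using Ft that by simp
    show "((\<lambda>s'. Ft y s') has_real_derivative G y s) (at s)" if "\<bar>s - x\<bar> < d" "\<bar>y - t\<bar> < d" for s y
      using G that by simp
    show "\<forall>e>0. \<exists>\<delta>>0. \<forall>s y. \<bar>s - x\<bar> < \<delta> \<longrightarrow> \<bar>y - t\<bar> < \<delta> \<longrightarrow> \<bar>G y s - G t x\<bar> < e"
      using Gc by metis
  qed
  then show ?thesis by simp
qed

lemma cont2_D:
  assumes "smoothD D" "cont2 S rho" "cont2 S u"
  shows "cont2 S (\<lambda>t x. D i j (rho t x) (u t x))"
proof -
  have "continuous_on S (\<lambda>p. (\<lambda>(r,v). D i j r v) (rho (fst p) (snd p), u (fst p) (snd p)))"
    by (rule continuous_on_compose2[OF D_cont[OF assms(1)] continuous_on_Pair[OF assms(2,3)]]) auto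
  then show ?thesis by simp
qed


locale sol =
  fixes D :: "nat \<Rightarrow> nat \<Rightarrow> real \<Rightarrow> real \<Rightarrow> real" and T :: real
    and rho0 u0 :: "real \<Rightarrow> real" and rho u :: "real \<Rightarrow> real \<Rightarrow> real"
  assumes sD: "smoothD D"
    and cs: "classical_solution (D 0 0) T rho0 u0 rho u"
    and er: "extra_regular T rho u"
begin

definition "xi = px rho"
definition "ux = px u"
definition "e = efun rho u"
definition "eta = px e"
definition "xix = px xi"
definition "etax = px eta"
definition "DD i j t x = D i j (rho t x) (u t x)"

abbreviation "S \<equiv> {0..<T} \<times> (UNIV::real set)"
abbreviation "U \<equiv> {0<..<T} \<times> (UNIV::real set)"

lemma C1_rho: "C1_on S rho" using cs unfolding classical_solution_def by blast
lemma C1_u: "C1_on S u" using cs unfolding classical_solution_def by blast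
lemma C1_xi: "C1_on S xi" using er unfolding extra_regular_def xi_def by blast
lemma C1_eta: "C1_on S eta" using er unfolding extra_regular_def eta_def e_def by blast

lemma US: "U \<subseteq> S" by auto

lemmas rhoP = C1_pxpt[OF C1_rho, folded xi_def]
lemmas uP = C1_pxpt[OF C1_u, folded ux_def]
lemmas xiP = C1_pxpt[OF C1_xi, folded xix_def]
lemmas etaP = C1_pxpt[OF C1_eta, folded etax_def]

lemma e_eq: "e t x = ux t x + rho t x" unfolding e_def efun_def ux_def by simp

lemma e_dx: "0 \<le> t \<Longrightarrow> t < T \<Longrightarrow> ((\<lambda>y. e t y) has_real_derivative eta t x) (at x)"
proof -
  assume "0 \<le> t" "t < T"
  then have "(\<lambda>y. efun rho u t y) differentiable (at x)" using er unfolding extra_regular_def by auto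
  then show ?thesis unfolding eta_def px_def e_def by (simp add: DERIV_deriv_iff_real_differentiable)
qed

lemma ux_dx: "0 \<le> t \<Longrightarrow> t < T \<Longrightarrow> ((\<lambda>y. ux t y) has_real_derivative eta t x - xi t x) (at x)"
proof -
  assume t: "0 \<le> t" "t < T"
  have "((\<lambda>y. e t y - rho t y) has_real_derivative eta t x - xi t x) (at x)"
    by (intro DERIV_diff e_dx rhoP(4) t)
  moreover have "(\<lambda>y. e t y - rho t y) = (\<lambda>y. ux t y)" by (auto simp: e_eq)
  ultimately show ?thesis by simp
qed

lemma DD_dx: "0 \<le> t \<Longrightarrow> t < T \<Longrightarrow>
   ((\<lambda>y. DD i j t y) has_real_derivative xi t x * DD (Suc i) j t x + ux t x * DD i (Suc j) t x) (at x)"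
  unfolding DD_def by (intro chainD[OF sD] rhoP(4) uP(4))

lemma DD_c: "cont2 S (DD i j)"
  unfolding DD_def by (rule cont2_D[OF sD rhoP(1) uP(1)])

lemma e_c: "cont2 S e"
proof -
  have "cont2 S (\<lambda>t x. ux t x + rho t x)" by (intro continuous_intros uP(2) rhoP(1))
  then show ?thesis by (simp add: e_eq[abs_def])
qed

definition "rhoT t x = - (xi t x * DD 0 0 t x + rho t x * (xi t x * DD 1 0 t x + ux t x * DD 0 1 t x))"
definition "uT t x = - u t x * ux t x + rho t x * (DD 0 0 t x - u t x)"

lemma pde1: "0 < t \<Longrightarrow> t < T \<Longrightarrow> pt rho t x = rhoT t x"
proof -
  assume t: "0 < t" "t < T"
  have eq: "pt rho t x + px (\<lambda>s y. rho s y * D 0 0 (rho s y) (u s y)) t x = 0"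
    using cs t unfolding classical_solution_def by auto
  have "((\<lambda>y. rho t y * DD 0 0 t y) has_real_derivative
      xi t x * DD 0 0 t x + rho t x * (xi t x * DD (Suc 0) 0 t x + ux t x * DD 0 (Suc 0) t x)) (at x)"
    by (rule DERIV_cong[OF DERIV_mult[OF rhoP(4)[where t=t and x=x] DD_dx[where t=t and i=0 and j=0 and x=x]]])
       (use t in \<open>auto simp: algebra_simps\<close>)
  then have "px (\<lambda>s y. rho s y * D 0 0 (rho s y) (u s y)) t x =
      xi t x * DD 0 0 t x + rho t x * (xi t x * DD (Suc 0) 0 t x + ux t x * DD 0 (Suc 0) t x)"
    unfolding px_def DD_def by (rule DERIV_imp_deriv)
  then show ?thesis using eq unfolding rhoT_def by simp
qed

lemma pde2: "0 < t \<Longrightarrow> t < T \<Longrightarrow> pt u t x = uT t x"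
proof -
  assume t: "0 < t" "t < T"
  have "pt u t x + u t x * px u t x = rho t x * (D 0 0 (rho t x) (u t x) - u t x)"
    using cs t unfolding classical_solution_def by auto
  then show ?thesis unfolding uT_def DD_def ux_def by (simp add: algebra_simps)
qed

end


context sol begin

lemma cU: "cont2 S X \<Longrightarrow> cont2 U X" by (erule continuous_on_subset) auto

lemma box: "0 < t \<Longrightarrow> t < T \<Longrightarrow> \<bar>s - t\<bar> < min t (T - t) \<Longrightarrow> 0 < s \<and> s < T"
  by auto

definition "xiT t x = - (DD 0 0 t x + rho t x * DD 1 0 t x) * xix t x
   - (2 * DD 1 0 t x + rho t x * DD 2 0 t x) * xi t x ^ 2
   - 2 * (DD 0 1 t x + rho t x * DD 1 1 t x) * ux t x * xi t x
   - rho t x * DD 0 2 t x * ux t x ^ 2 - rho t x * DD 0 1 t x * (eta t x - xi t x)"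

lemma xi_dt: assumes t: "0 < t" "t < T" shows "((\<lambda>s. xi s x) has_real_derivative xiT t x) (at t)"
proof -
  define d where "d = min t (T - t)"
  have d: "0 < d" using t by (simp add: d_def)
  have sw: "((\<lambda>y. pt rho t y) has_real_derivative pt xi t x) (at x)"
  proof (rule schwarz[of d t x rho "pt rho" xi "pt xi"])
    show "0 < d" by fact
    show "((\<lambda>s'. rho s' y) has_real_derivative pt rho s y) (at s)" if "\<bar>s - t\<bar> < d" "\<bar>y - x\<bar> < d" for s y
      using box[OF t, of s] that rhoP(5) unfolding d_def by auto
    show "((\<lambda>y'. rho s y') has_real_derivative xi s y) (at y)" if "\<bar>s - t\<bar> < d" "\<bar>y - x\<bar> < d" for s y
      using box[OF t, of s] that rhoP(4) unfolding d_def by auto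
    show "((\<lambda>s'. xi s' y) has_real_derivative pt xi s y) (at s)" if "\<bar>s - t\<bar> < d" "\<bar>y - x\<bar> < d" for s y
      using box[OF t, of s] that xiP(5) unfolding d_def by auto
    show "\<forall>e>0. \<exists>\<delta>>0. \<forall>s y. \<bar>s - t\<bar> < \<delta> \<longrightarrow> \<bar>y - x\<bar> < \<delta> \<longrightarrow> \<bar>pt xi s y - pt xi t x\<bar> < e"
      by (rule cont_pointwise'[OF xiP(3) t])
  qed
  have eqf: "(\<lambda>y. pt rho t y) = (\<lambda>y. rhoT t y)" using pde1 t by auto
  have t0: "0 \<le> t" using t by simp
  have dr: "((\<lambda>y. rhoT t y) has_real_derivative xiT t x) (at x)"
    unfolding rhoT_def
    by (rule DERIV_cong[OF DERIV_minus[OF DERIV_add[OF DERIV_mult[OF xiP(4)[OF t0 t(2)] DD_dx[OF t0 t(2)]]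
          DERIV_mult[OF rhoP(4)[OF t0 t(2)] DERIV_add[OF DERIV_mult[OF xiP(4)[OF t0 t(2)] DD_dx[OF t0 t(2)]]
              DERIV_mult[OF ux_dx[OF t0 t(2)] DD_dx[OF t0 t(2)]]]]]]])
       (simp add: xiT_def One_nat_def numeral_2_eq_2 power2_eq_square algebra_simps)
  have "pt xi t x = xiT t x" using DERIV_unique[OF sw[unfolded eqf] dr] .
  then show ?thesis using xiP(5)[OF t, of x] by simp
qed

definition "Gu t x = - ux t x * ux t x + - u t x * (eta t x - xi t x)
   + (xi t x * (DD 0 0 t x - u t x) + rho t x * (xi t x * DD 1 0 t x + ux t x * DD 0 1 t x - ux t x))"

lemma Gu_c: "cont2 U Gu"
  unfolding Gu_def
  by (intro continuous_intros cU uP(1) uP(2) etaP(1) rhoP(1) rhoP(2) DD_c)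

lemma uT_dx: assumes s: "0 < s" "s < T" shows "((\<lambda>y. pt u s y) has_real_derivative Gu s y0) (at y0)"
proof -
  have s0: "0 \<le> s" using s by simp
  have eqf: "(\<lambda>y. pt u s y) = (\<lambda>y. uT s y)" using pde2 s by auto
  have "((\<lambda>y. uT s y) has_real_derivative Gu s y0) (at y0)"
    unfolding uT_def
    by (rule DERIV_cong[OF DERIV_add[OF DERIV_mult[OF DERIV_minus[OF uP(4)[OF s0 s(2)]] ux_dx[OF s0 s(2)]]
          DERIV_mult[OF rhoP(4)[OF s0 s(2)] DERIV_diff[OF DD_dx[OF s0 s(2)] uP(4)[OF s0 s(2)]]]]])
       (simp add: Gu_def One_nat_def algebra_simps)
  then show ?thesis using eqf by simp
qed

lemma ux_dt: assumes t: "0 < t" "t < T" shows "((\<lambda>s. ux s x) has_real_derivative Gu t x) (at t)"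
proof -
  define d where "d = min t (T - t)"
  have d: "0 < d" using t by (simp add: d_def)
  show ?thesis
  proof (rule schwarz'[of d t x u "pt u" ux Gu])
    show "0 < d" by fact
    show "((\<lambda>s'. u s' y) has_real_derivative pt u s y) (at s)" if "\<bar>s - t\<bar> < d" "\<bar>y - x\<bar> < d" for s y
      using box[OF t, of s] that uP(5) unfolding d_def by auto
    show "((\<lambda>y'. u s y') has_real_derivative ux s y) (at y)" if "\<bar>s - t\<bar> < d" "\<bar>y - x\<bar> < d" for s y
      using box[OF t, of s] that uP(4) unfolding d_def by auto
    show "((\<lambda>y'. pt u s y') has_real_derivative Gu s y) (at y)" if "\<bar>s - t\<bar> < d" "\<bar>y - x\<bar> < d" for s y
      using box[OF t, of s] that uT_dx unfolding d_def by auto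
    show "\<forall>e>0. \<exists>\<delta>>0. \<forall>s y. \<bar>s - t\<bar> < \<delta> \<longrightarrow> \<bar>y - x\<bar> < \<delta> \<longrightarrow> \<bar>Gu s y - Gu t x\<bar> < e"
      by (rule cont_pointwise'[OF Gu_c t])
  qed
qed

definition "eT t x = - u t x * eta t x - ux t x * e t x"

lemma e_dt: assumes t: "0 < t" "t < T" shows "((\<lambda>s. e s x) has_real_derivative eT t x) (at t)"
proof -
  have eqf: "(\<lambda>s. e s x) = (\<lambda>s. ux s x + rho s x)" by (auto simp: e_eq)
  have "((\<lambda>s. ux s x + rho s x) has_real_derivative eT t x) (at t)"
    by (rule DERIV_cong[OF DERIV_add[OF ux_dt[OF t] rhoP(5)[OF t]]])
       (simp add: pde1[OF t] rhoT_def Gu_def eT_def e_eq algebra_simps)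
  then show ?thesis using eqf by simp
qed

definition "etaT t x = - u t x * etax t x - 2 * ux t x * eta t x - (eta t x - xi t x) * e t x"

lemma etaT_c: "cont2 U etaT"
  unfolding etaT_def
  by (intro continuous_intros cU uP(1) uP(2) etaP(1) etaP(2) rhoP(2) e_c)

lemma eT_dx: assumes s: "0 < s" "s < T" shows "((\<lambda>y. eT s y) has_real_derivative etaT s y0) (at y0)"
proof -
  have s0: "0 \<le> s" using s by simp
  show ?thesis
    unfolding eT_def
    by (rule DERIV_cong[OF DERIV_diff[OF DERIV_mult[OF DERIV_minus[OF uP(4)[OF s0 s(2)]] etaP(4)[OF s0 s(2)]]
          DERIV_mult[OF ux_dx[OF s0 s(2)] e_dx[OF s0 s(2)]]]])
       (simp add: etaT_def algebra_simps)
qed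

lemma eta_dt: assumes t: "0 < t" "t < T" shows "((\<lambda>s. eta s x) has_real_derivative etaT t x) (at t)"
proof -
  define d where "d = min t (T - t)"
  have d: "0 < d" using t by (simp add: d_def)
  show ?thesis
  proof (rule schwarz'[of d t x e eT eta etaT])
    show "0 < d" by fact
    show "((\<lambda>s'. e s' y) has_real_derivative eT s y) (at s)" if "\<bar>s - t\<bar> < d" "\<bar>y - x\<bar> < d" for s y
      using box[OF t, of s] that e_dt unfolding d_def by auto
    show "((\<lambda>y'. e s y') has_real_derivative eta s y) (at y)" if "\<bar>s - t\<bar> < d" "\<bar>y - x\<bar> < d" for s y
      using box[OF t, of s] that e_dx unfolding d_def by auto
    show "((\<lambda>y'. eT s y') has_real_derivative etaT s y) (at y)" if "\<bar>s - t\<bar> < d" "\<bar>y - x\<bar> < d" for s y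
      using box[OF t, of s] that eT_dx unfolding d_def by auto
    show "\<forall>e>0. \<exists>\<delta>>0. \<forall>s y. \<bar>s - t\<bar> < \<delta> \<longrightarrow> \<bar>y - x\<bar> < \<delta> \<longrightarrow> \<bar>etaT s y - etaT t x\<bar> < e"
      by (rule cont_pointwise'[OF etaT_c t])
  qed
qed

end


lemma prod_le: "\<bar>a\<bar> \<le> A \<Longrightarrow> \<bar>b\<bar> \<le> B \<Longrightarrow> \<bar>a * b\<bar> \<le> A * (B::real)"
  by (simp add: abs_mult mult_mono')

lemma prod_lb: "\<bar>a\<bar> \<le> A \<Longrightarrow> \<bar>b\<bar> \<le> B \<Longrightarrow> - (A * B) \<le> a * (b::real)"
  using prod_le[of a A b B] by linarith

lemma prod_ub: "\<bar>a\<bar> \<le> A \<Longrightarrow> \<bar>b\<bar> \<le> B \<Longrightarrow> a * b \<le> A * (B::real)"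
  using prod_le[of a A b B] by linarith

context sol begin

lemma bnds: assumes "t < T"
  shows "\<exists>B. \<forall>s\<in>{0..t}. \<forall>x. \<bar>rho s x\<bar> \<le> B \<and> \<bar>u s x\<bar> \<le> B \<and> \<bar>xi s x\<bar> \<le> B \<and> \<bar>ux s x\<bar> \<le> B \<and> \<bar>eta s x\<bar> \<le> B"
proof -
  obtain B1 where B1: "\<forall>s\<in>{0..t}. \<forall>x. \<bar>rho s x\<bar> \<le> B1 \<and> \<bar>u s x\<bar> \<le> B1 \<and> \<bar>px rho s x\<bar> \<le> B1 \<and> \<bar>px u s x\<bar> \<le> B1"
    using cs assms unfolding classical_solution_def by blast
  obtain B2 where B2: "\<forall>s\<in>{0..t}. \<forall>x. \<bar>px rho s x\<bar> \<le> B2 \<and> \<bar>px (efun rho u) s x\<bar> \<le> B2"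
    using er assms unfolding extra_regular_def by blast
  show ?thesis
    by (rule exI[of _ "max B1 B2"]) (use B1 B2 in \<open>auto simp: xi_def ux_def eta_def e_def le_max_iff_disj\<close>)
qed

lemma DD_bnd: assumes "t < T" shows "\<exists>C. \<forall>s\<in>{0..t}. \<forall>x. \<bar>DD i j s x\<bar> \<le> C"
proof -
  obtain B where B: "\<forall>s\<in>{0..t}. \<forall>x. \<bar>rho s x\<bar> \<le> B \<and> \<bar>u s x\<bar> \<le> B"
    using bnds[OF assms] by blast
  obtain C where C: "\<forall>r v. \<bar>r\<bar> \<le> B \<longrightarrow> \<bar>v\<bar> \<le> B \<longrightarrow> \<bar>D i j r v\<bar> \<le> C"
    using D_bounded[OF sD] by blast
  show ?thesis using B C unfolding DD_def by blast
qed

lemma rho_init: "rho 0 x = rho0 x" and u_init: "u 0 x = u0 x"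
  using cs unfolding classical_solution_def by auto

lemma xi_init: "xi 0 x = deriv rho0 x"
proof -
  have "(\<lambda>y. rho 0 y) = rho0" using rho_init by auto
  then show ?thesis unfolding xi_def px_def by simp
qed

lemma ux_init: "ux 0 x = deriv u0 x"
proof -
  have "(\<lambda>y. u 0 y) = u0" using u_init by auto
  then show ?thesis unfolding ux_def px_def by simp
qed

lemma e_init: "e 0 x = deriv u0 x + rho0 x" by (simp add: e_eq ux_init rho_init)

lemma eta_init: "eta 0 x = deriv (\<lambda>y. deriv u0 y + rho0 y) x"
proof -
  have "(\<lambda>y. e 0 y) = (\<lambda>y. deriv u0 y + rho0 y)" using e_init by auto
  then show ?thesis unfolding eta_def px_def by simp
qed

lemma contS: "cont2 S X \<Longrightarrow> t1 < T \<Longrightarrow> continuous_on ({0..t1}\<times>UNIV) (\<lambda>(s,y). X s y)"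
  unfolding cont2_iff by (erule continuous_on_subset) auto

lemma P1: assumes r0: "\<forall>x. rho0 x \<ge> 0" shows "\<forall>t\<in>{0..<T}. \<forall>x. rho t x \<ge> 0"
proof (intro ballI allI)
  fix t x assume t: "t \<in> {0..<T}"
  define t1 where "t1 = (t + T) / 2"
  have t1: "0 < t1" "t1 < T" "t \<le> t1" using t by (auto simp: t1_def)
  obtain B where B: "\<forall>s\<in>{0..t1}. \<forall>x. \<bar>rho s x\<bar> \<le> B \<and> \<bar>u s x\<bar> \<le> B \<and> \<bar>xi s x\<bar> \<le> B \<and> \<bar>ux s x\<bar> \<le> B \<and> \<bar>eta s x\<bar> \<le> B"
    using bnds[OF t1(2)] by blast
  obtain C0 where C0: "\<forall>s\<in>{0..t1}. \<forall>x. \<bar>DD 0 0 s x\<bar> \<le> C0" using DD_bnd[OF t1(2)] by blast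
  obtain C1 where C1: "\<forall>s\<in>{0..t1}. \<forall>x. \<bar>DD 1 0 s x\<bar> \<le> C1" using DD_bnd[OF t1(2)] by blast
  obtain C2 where C2: "\<forall>s\<in>{0..t1}. \<forall>x. \<bar>DD 0 1 s x\<bar> \<le> C2" using DD_bnd[OF t1(2)] by blast
  define K where "K = C0 + (B * C1 + B * C2)"
  have "\<forall>s\<in>{0..t1}. \<forall>x. rho s x \<ge> 0 \<and> rho s x \<ge> 0"
  proof (rule mp2[where A1x=xi and A2x=xi and A1t=rhoT and A2t=rhoT and B=B and L="K+1"])
    show "0 < t1" by fact
    show "continuous_on ({0..t1}\<times>UNIV) (\<lambda>(s,y). rho s y)" by (rule contS[OF rhoP(1) t1(2)])
    then show "continuous_on ({0..t1}\<times>UNIV) (\<lambda>(s,y). rho s y)" .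
    show "\<bar>rho s x\<bar> \<le> B \<and> \<bar>rho s x\<bar> \<le> B" if "s \<in> {0..t1}" for s x using B that by auto
    show "0 \<le> rho 0 x \<and> 0 \<le> rho 0 x" for x using r0 rho_init by auto
    show "((\<lambda>y. rho s y) has_real_derivative xi s x) (at x)" if "0 < s" "s \<le> t1" for s x
      using rhoP(4) that t1 by auto
    then show "((\<lambda>y. rho s y) has_real_derivative xi s x) (at x)" if "0 < s" "s \<le> t1" for s x
      using that .
    show dt: "((\<lambda>s'. rho s' x) has_real_derivative rhoT s x) (at s)" if "0 < s" "s \<le> t1" for s x
      using rhoP(5)[of s x] pde1[of s x] that t1 by auto
    then show "((\<lambda>s'. rho s' x) has_real_derivative rhoT s x) (at s)" if "0 < s" "s \<le> t1" for s x
      using that .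
    have step: False if s: "0 < s" "s \<le> t1" and \<epsilon>: "0 < \<epsilon>" and a: "rho s x = - \<epsilon> * psi (K+1) s x"
      and ax: "xi s x = - \<epsilon> * psix (K+1) s x" and at: "rhoT s x \<le> - \<epsilon> * ((K+1) * psi (K+1) s x)" for s x \<epsilon>
    proof -
      let ?P = "psi (K+1) s x" and ?Q = "psix (K+1) s x"
      have sI: "s \<in> {0..t1}" using s by auto
      have P: "?P > 0" by (rule psi_pos)
      have Q: "\<bar>?Q\<bar> \<le> ?P" by (rule psix_le)
      define c where "c = xi s x * DD 1 0 s x + ux s x * DD 0 1 s x"
      have cb: "\<bar>c\<bar> \<le> B * C1 + B * C2"
        unfolding c_def using prod_le[of "xi s x" B "DD 1 0 s x" C1] prod_le[of "ux s x" B "DD 0 1 s x" C2] B C1 C2 sI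
        by (smt (verit))
      have eq: "rhoT s x = \<epsilon> * (?Q * DD 0 0 s x) + \<epsilon> * (?P * c)"
        unfolding rhoT_def c_def using a ax by (simp add: algebra_simps)
      have h1: "- (?P * C0) \<le> ?Q * DD 0 0 s x" using prod_lb[OF Q, of "DD 0 0 s x" C0] C0 sI by auto
      have h2: "- (?P * (B * C1 + B * C2)) \<le> ?P * c" using prod_lb[of ?P ?P c] P cb by auto
      have "\<epsilon> * (- (?P * C0)) \<le> \<epsilon> * (?Q * DD 0 0 s x)" using h1 \<epsilon> by (intro mult_left_mono) auto
      moreover have "\<epsilon> * (- (?P * (B * C1 + B * C2))) \<le> \<epsilon> * (?P * c)" using h2 \<epsilon> by (intro mult_left_mono) auto
      moreover have "\<epsilon> * ((K+1) * ?P) = \<epsilon> * (?P * C0) + \<epsilon> * (?P * (B * C1 + B * C2)) + \<epsilon> * ?P"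
        unfolding K_def by (simp add: algebra_simps)
      moreover have "\<epsilon> * ?P > 0" using \<epsilon> P by simp
      ultimately show False using eq at by linarith
    qed
    show "False" if "0 < s" "s \<le> t1" "0 < \<epsilon>" "rho s x = - \<epsilon> * psi (K + 1) s x"
        "- \<epsilon> * psi (K + 1) s x \<le> rho s x" "xi s x = - \<epsilon> * psix (K + 1) s x"
        "rhoT s x \<le> - \<epsilon> * ((K + 1) * psi (K + 1) s x)" for s x \<epsilon>
      using step that by blast
    then show "False" if "0 < s" "s \<le> t1" "0 < \<epsilon>" "rho s x = - \<epsilon> * psi (K + 1) s x"
        "- \<epsilon> * psi (K + 1) s x \<le> rho s x" "xi s x = - \<epsilon> * psix (K + 1) s x"
        "rhoT s x \<le> - \<epsilon> * ((K + 1) * psi (K + 1) s x)" for s x \<epsilon>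
      using that by blast
  qed
  then show "rho t x \<ge> 0" using t t1 by auto
qed

end


context sol begin

lemma P2: assumes e0: "\<forall>x. deriv u0 x + rho0 x \<ge> 0" shows "\<forall>t\<in>{0..<T}. \<forall>x. e t x \<ge> 0"
proof (intro ballI allI)
  fix t x assume t: "t \<in> {0..<T}"
  define t1 where "t1 = (t + T) / 2"
  have t1: "0 < t1" "t1 < T" "t \<le> t1" using t by (auto simp: t1_def)
  obtain B where B: "\<forall>s\<in>{0..t1}. \<forall>x. \<bar>rho s x\<bar> \<le> B \<and> \<bar>u s x\<bar> \<le> B \<and> \<bar>xi s x\<bar> \<le> B \<and> \<bar>ux s x\<bar> \<le> B \<and> \<bar>eta s x\<bar> \<le> B"
    using bnds[OF t1(2)] by blast
  define L where "L = 2 * B + 1"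
  have dx: "((\<lambda>y. e s y) has_real_derivative eta s x) (at x)" if "0 < s" "s \<le> t1" for s x
    using e_dx that t1 by auto
  have dt: "((\<lambda>s'. e s' x) has_real_derivative eT s x) (at s)" if "0 < s" "s \<le> t1" for s x
    using e_dt that t1 by auto
  have bd: "\<bar>e s x\<bar> \<le> 2 * B \<and> \<bar>e s x\<bar> \<le> 2 * B" if "s \<in> {0..t1}" for s x
    using B[rule_format, OF that, of x] unfolding e_eq by (smt (verit))
  have step: False if s: "0 < s" "s \<le> t1" and \<epsilon>: "0 < \<epsilon>" and a: "e s x = - \<epsilon> * psi L s x"
      and ax: "eta s x = - \<epsilon> * psix L s x" and at: "eT s x \<le> - \<epsilon> * (L * psi L s x)" for s x \<epsilon>
  proof -
    let ?P = "psi L s x" and ?Q = "psix L s x"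
    have sI: "s \<in> {0..t1}" using s by auto
    have P: "?P > 0" by (rule psi_pos)
    have Q: "\<bar>?Q\<bar> \<le> ?P" by (rule psix_le)
    have eq: "eT s x = \<epsilon> * (u s x * ?Q) + \<epsilon> * (ux s x * ?P)"
      unfolding eT_def using a ax by (simp add: algebra_simps)
    have h1: "- (B * ?P) \<le> u s x * ?Q" using prod_lb[of "u s x" B ?Q ?P] Q B sI by auto
    have h2: "- (B * ?P) \<le> ux s x * ?P" using prod_lb[of "ux s x" B ?P ?P] P B sI by auto
    have "\<epsilon> * (- (B * ?P)) \<le> \<epsilon> * (u s x * ?Q)" using h1 \<epsilon> by (intro mult_left_mono) auto
    moreover have "\<epsilon> * (- (B * ?P)) \<le> \<epsilon> * (ux s x * ?P)" using h2 \<epsilon> by (intro mult_left_mono) auto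
    moreover have "\<epsilon> * (L * ?P) = \<epsilon> * (B * ?P) + \<epsilon> * (B * ?P) + \<epsilon> * ?P"
      unfolding L_def by (simp add: algebra_simps)
    moreover have "\<epsilon> * ?P > 0" using \<epsilon> P by simp
    ultimately show False using eq at by linarith
  qed
  have "\<forall>s\<in>{0..t1}. \<forall>x. e s x \<ge> 0 \<and> e s x \<ge> 0"
    by (rule mp2[where A1x=eta and A2x=eta and A1t=eT and A2t=eT and B="2*B" and L=L,
          OF t1(1) contS[OF e_c t1(2)] contS[OF e_c t1(2)] bd _ dx dt dx dt])
       (use e0 e_init step in auto)
  then show "e t x \<ge> 0" using t t1 by auto
qed

lemma P3:
  assumes sg: "\<sigma> = 1 \<or> \<sigma> = -1"
    and r0: "\<forall>x. rho0 x \<ge> 0" and e0: "\<forall>x. deriv u0 x + rho0 x \<ge> 0"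
    and xi0: "\<forall>x. \<sigma> * xi 0 x \<ge> 0" and eta0: "\<forall>x. \<sigma> * eta 0 x \<ge> 0"
    and f01: "\<forall>r\<ge>0. \<forall>v. D 0 1 r v \<le> 0"
    and f02: "\<forall>r\<ge>0. \<forall>v. \<sigma> * D 0 2 r v \<le> 0"
  shows "\<forall>t\<in>{0..<T}. \<forall>x. \<sigma> * xi t x \<ge> 0 \<and> \<sigma> * eta t x \<ge> 0"
proof (intro ballI allI)
  fix t x assume t: "t \<in> {0..<T}"
  define t1 where "t1 = (t + T) / 2"
  have t1: "0 < t1" "t1 < T" "t \<le> t1" using t by (auto simp: t1_def)
  have rpos: "rho s y \<ge> 0" if "s \<in> {0..t1}" for s y using P1[OF r0] that t1 by auto
  have epos: "e s y \<ge> 0" if "s \<in> {0..t1}" for s y using P2[OF e0] that t1 by auto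
  have sab: "\<bar>\<sigma>\<bar> = 1" using sg by auto
  obtain B where B: "\<forall>s\<in>{0..t1}. \<forall>x. \<bar>rho s x\<bar> \<le> B \<and> \<bar>u s x\<bar> \<le> B \<and> \<bar>xi s x\<bar> \<le> B \<and> \<bar>ux s x\<bar> \<le> B \<and> \<bar>eta s x\<bar> \<le> B"
    using bnds[OF t1(2)] by blast
  obtain C00 where C00: "\<forall>s\<in>{0..t1}. \<forall>x. \<bar>DD 0 0 s x\<bar> \<le> C00" using DD_bnd[OF t1(2)] by blast
  obtain C10 where C10: "\<forall>s\<in>{0..t1}. \<forall>x. \<bar>DD 1 0 s x\<bar> \<le> C10" using DD_bnd[OF t1(2)] by blast
  obtain C01 where C01: "\<forall>s\<in>{0..t1}. \<forall>x. \<bar>DD 0 1 s x\<bar> \<le> C01" using DD_bnd[OF t1(2)] by blast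
  obtain C20 where C20: "\<forall>s\<in>{0..t1}. \<forall>x. \<bar>DD 2 0 s x\<bar> \<le> C20" using DD_bnd[OF t1(2)] by blast
  obtain C11 where C11: "\<forall>s\<in>{0..t1}. \<forall>x. \<bar>DD 1 1 s x\<bar> \<le> C11" using DD_bnd[OF t1(2)] by blast
  define G1 where "G1 = C00 + B * C10"
  define G2 where "G2 = (2 * C10 + B * C20) * B"
  define G3 where "G3 = 2 * (C01 + B * C11) * B"
  define L where "L = G1 + G2 + G3 + 3 * B + 1"
  have Bnn: "B \<ge> 0" using B t1 by (meson abs_ge_zero atLeastAtMost_iff less_eq_real_def order_trans)
  have gRb: "\<bar>DD 0 0 s y + rho s y * DD 1 0 s y\<bar> \<le> G1" if "s \<in> {0..t1}" for s y
    using prod_le[of "rho s y" B "DD 1 0 s y" C10] B C00 C10 that unfolding G1_def by (smt (verit))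
  have gRRb: "\<bar>(2 * DD 1 0 s y + rho s y * DD 2 0 s y) * xi s y\<bar> \<le> G2" if "s \<in> {0..t1}" for s y
  proof -
    have "\<bar>2 * DD 1 0 s y + rho s y * DD 2 0 s y\<bar> \<le> 2 * C10 + B * C20"
      using prod_le[of "rho s y" B "DD 2 0 s y" C20] B C10 C20 that by (smt (verit))
    then show ?thesis using prod_le[of _ "2 * C10 + B * C20" "xi s y" B] B that unfolding G2_def by auto
  qed
  have gRUb: "\<bar>2 * (DD 0 1 s y + rho s y * DD 1 1 s y) * ux s y\<bar> \<le> G3" if "s \<in> {0..t1}" for s y
  proof -
    have "\<bar>2 * (DD 0 1 s y + rho s y * DD 1 1 s y)\<bar> \<le> 2 * (C01 + B * C11)"
      using prod_le[of "rho s y" B "DD 1 1 s y" C11] B C01 C11 that by (smt (verit))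
    then show ?thesis using prod_le[of _ "2 * (C01 + B * C11)" "ux s y" B] B that unfolding G3_def by auto
  qed
  have cxi: "continuous_on ({0..t1}\<times>UNIV) (\<lambda>(s,y). \<sigma> * xi s y)"
  proof -
    have "cont2 S (\<lambda>s y. \<sigma> * xi s y)" by (intro continuous_intros rhoP(2))
    then show ?thesis by (rule contS[OF _ t1(2)])
  qed
  have ceta: "continuous_on ({0..t1}\<times>UNIV) (\<lambda>(s,y). \<sigma> * eta s y)"
  proof -
    have "cont2 S (\<lambda>s y. \<sigma> * eta s y)" by (intro continuous_intros etaP(1))
    then show ?thesis by (rule contS[OF _ t1(2)])
  qed
  have bd: "\<bar>\<sigma> * xi s y\<bar> \<le> B \<and> \<bar>\<sigma> * eta s y\<bar> \<le> B" if "s \<in> {0..t1}" for s y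
    using B that sab by (auto simp: abs_mult)
  have d1x: "((\<lambda>y. \<sigma> * xi s y) has_real_derivative \<sigma> * xix s y) (at y)" if "0 < s" "s \<le> t1" for s y
    using that t1 by (intro DERIV_cmult xiP(4)) auto
  have d1t: "((\<lambda>s'. \<sigma> * xi s' y) has_real_derivative \<sigma> * xiT s y) (at s)" if "0 < s" "s \<le> t1" for s y
    using that t1 by (intro DERIV_cmult xi_dt) auto
  have d2x: "((\<lambda>y. \<sigma> * eta s y) has_real_derivative \<sigma> * etax s y) (at y)" if "0 < s" "s \<le> t1" for s y
    using that t1 by (intro DERIV_cmult etaP(4)) auto
  have d2t: "((\<lambda>s'. \<sigma> * eta s' y) has_real_derivative \<sigma> * etaT s y) (at s)" if "0 < s" "s \<le> t1" for s y
    using that t1 by (intro DERIV_cmult eta_dt) auto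
  have step1: False if s: "0 < s" "s \<le> t1" and \<epsilon>: "0 < \<epsilon>" and a: "\<sigma> * xi s y = - \<epsilon> * psi L s y"
      and b: "\<sigma> * eta s y \<ge> - \<epsilon> * psi L s y"
      and ax: "\<sigma> * xix s y = - \<epsilon> * psix L s y" and at: "\<sigma> * xiT s y \<le> - \<epsilon> * (L * psi L s y)" for s y \<epsilon>
  proof -
    let ?P = "psi L s y" and ?Q = "psix L s y"
    have sI: "s \<in> {0..t1}" using s by auto
    have P: "?P > 0" by (rule psi_pos)
    have Q: "\<bar>?Q\<bar> \<le> ?P" by (rule psix_le)
    let ?gR = "DD 0 0 s y + rho s y * DD 1 0 s y"
    let ?gRRx = "(2 * DD 1 0 s y + rho s y * DD 2 0 s y) * xi s y"
    let ?gRU = "2 * (DD 0 1 s y + rho s y * DD 1 1 s y) * ux s y"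
    let ?rD = "rho s y * DD 0 1 s y"
    let ?N1 = "\<sigma> * D 0 2 (rho s y) (u s y) * (rho s y * ux s y ^ 2)"
    have eq0: "\<sigma> * xiT s y = - ?gR * (\<sigma> * xix s y) - ?gRRx * (\<sigma> * xi s y) - ?gRU * (\<sigma> * xi s y)
        - ?N1 - ?rD * (\<sigma> * eta s y) + ?rD * (\<sigma> * xi s y)"
      unfolding xiT_def DD_def by (simp add: algebra_simps power2_eq_square)
    have N1: "?N1 \<le> 0"
      by (rule mult_nonpos_nonneg) (use f02 rpos[OF sI, of y] in auto)
    have rD: "?rD \<le> 0" using f01 rpos[OF sI, of y] unfolding DD_def by (simp add: mult_nonneg_nonpos)
    have N2: "?rD * (\<sigma> * eta s y) \<le> ?rD * (- \<epsilon> * ?P)"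
      using b rD by (rule mult_left_mono_neg)
    have eq: "\<sigma> * xiT s y = \<epsilon> * (?gR * ?Q) + \<epsilon> * (?gRRx * ?P) + \<epsilon> * (?gRU * ?P) - ?N1
        - ?rD * (\<sigma> * eta s y) - \<epsilon> * (?rD * ?P)"
      unfolding eq0 a ax by (simp add: algebra_simps)
    have h1: "- (G1 * ?P) \<le> ?gR * ?Q" using prod_lb[OF gRb[OF sI] Q] .
    have h2: "- (G2 * ?P) \<le> ?gRRx * ?P" using prod_lb[OF gRRb[OF sI], of ?P ?P] P by auto
    have h3: "- (G3 * ?P) \<le> ?gRU * ?P" using prod_lb[OF gRUb[OF sI], of ?P ?P] P by auto
    have "\<epsilon> * (- (G1 * ?P)) \<le> \<epsilon> * (?gR * ?Q)" using h1 \<epsilon> by (intro mult_left_mono) auto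
    moreover have "\<epsilon> * (- (G2 * ?P)) \<le> \<epsilon> * (?gRRx * ?P)" using h2 \<epsilon> by (intro mult_left_mono) auto
    moreover have "\<epsilon> * (- (G3 * ?P)) \<le> \<epsilon> * (?gRU * ?P)" using h3 \<epsilon> by (intro mult_left_mono) auto
    moreover have "\<epsilon> * (L * ?P) = \<epsilon> * (G1 * ?P) + \<epsilon> * (G2 * ?P) + \<epsilon> * (G3 * ?P) + 3 * B * (\<epsilon> * ?P) + \<epsilon> * ?P"
      unfolding L_def by (simp add: algebra_simps)
    moreover have "\<epsilon> * ?P > 0" using \<epsilon> P by simp
    moreover have "3 * B * (\<epsilon> * ?P) \<ge> 0" using Bnn \<epsilon> P by simp
    moreover have "?rD * (- \<epsilon> * ?P) = - (\<epsilon> * (?rD * ?P))" by (simp add: algebra_simps)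
    ultimately show False using eq at N1 N2 by linarith
  qed
  have step2: False if s: "0 < s" "s \<le> t1" and \<epsilon>: "0 < \<epsilon>" and a: "\<sigma> * eta s y = - \<epsilon> * psi L s y"
      and b: "\<sigma> * xi s y \<ge> - \<epsilon> * psi L s y"
      and ax: "\<sigma> * etax s y = - \<epsilon> * psix L s y" and at: "\<sigma> * etaT s y \<le> - \<epsilon> * (L * psi L s y)" for s y \<epsilon>
  proof -
    let ?P = "psi L s y" and ?Q = "psix L s y"
    have sI: "s \<in> {0..t1}" using s by auto
    have P: "?P > 0" by (rule psi_pos)
    have Q: "\<bar>?Q\<bar> \<le> ?P" by (rule psix_le)
    have eq0: "\<sigma> * etaT s y = - u s y * (\<sigma> * etax s y) - 2 * ux s y * (\<sigma> * eta s y)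
        - (\<sigma> * eta s y) * e s y + (\<sigma> * xi s y) * e s y"
      unfolding etaT_def by (simp add: algebra_simps)
    have eq: "\<sigma> * etaT s y = \<epsilon> * (u s y * ?Q) + 2 * (\<epsilon> * (ux s y * ?P)) + \<epsilon> * ?P * e s y + (\<sigma> * xi s y) * e s y"
      unfolding eq0 a ax by (simp add: algebra_simps)
    have N: "(\<sigma> * xi s y) * e s y \<ge> (- \<epsilon> * ?P) * e s y" using b epos[OF sI, of y] by (rule mult_right_mono)
    have h1: "- (B * ?P) \<le> u s y * ?Q" using prod_lb[of "u s y" B ?Q ?P] Q B sI by auto
    have h2: "- (B * ?P) \<le> ux s y * ?P" using prod_lb[of "ux s y" B ?P ?P] P B sI by auto
    have "\<epsilon> * (- (B * ?P)) \<le> \<epsilon> * (u s y * ?Q)" using h1 \<epsilon> by (intro mult_left_mono) auto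
    moreover have "\<epsilon> * (- (B * ?P)) \<le> \<epsilon> * (ux s y * ?P)" using h2 \<epsilon> by (intro mult_left_mono) auto
    moreover have "\<epsilon> * (L * ?P) = (G1 + G2 + G3) * (\<epsilon> * ?P) + 3 * (\<epsilon> * (B * ?P)) + \<epsilon> * ?P"
      unfolding L_def by (simp add: algebra_simps)
    moreover have "(G1 + G2 + G3) * (\<epsilon> * ?P) \<ge> 0"
    proof -
      have "G1 \<ge> 0" using gRb[of 0 0] t1 by (meson abs_ge_zero atLeastAtMost_iff less_eq_real_def order_trans)
      moreover have "G2 \<ge> 0" using gRRb[of 0 0] t1 by (meson abs_ge_zero atLeastAtMost_iff less_eq_real_def order_trans)
      moreover have "G3 \<ge> 0" using gRUb[of 0 0] t1 by (meson abs_ge_zero atLeastAtMost_iff less_eq_real_def order_trans)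
      ultimately show ?thesis using \<epsilon> P by simp
    qed
    moreover have "\<epsilon> * ?P > 0" using \<epsilon> P by simp
    moreover have "(- \<epsilon> * ?P) * e s y = - (\<epsilon> * ?P * e s y)" by simp
    ultimately show False using eq at N by linarith
  qed
  have "\<forall>s\<in>{0..t1}. \<forall>x. \<sigma> * xi s x \<ge> 0 \<and> \<sigma> * eta s x \<ge> 0"
    by (rule mp2[where A1x="\<lambda>s y. \<sigma> * xix s y" and A2x="\<lambda>s y. \<sigma> * etax s y"
          and A1t="\<lambda>s y. \<sigma> * xiT s y" and A2t="\<lambda>s y. \<sigma> * etaT s y" and B=B and L=L,
          OF t1(1) cxi ceta bd _ d1x d1t d2x d2t])
       (use xi0 eta0 step1 step2 in auto)
  then show "\<sigma> * xi t x \<ge> 0 \<and> \<sigma> * eta t x \<ge> 0" using t t1 by auto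
qed

end


lemma cbox_bound:
  fixes h :: "real \<Rightarrow> real \<Rightarrow> real"
  assumes "continuous_on UNIV (\<lambda>p. h (fst p) (snd p))"
  shows "\<exists>C. \<forall>r v. \<bar>r\<bar> \<le> M \<longrightarrow> \<bar>v\<bar> \<le> M \<longrightarrow> \<bar>h r v\<bar> \<le> C"
proof -
  have "compact ((\<lambda>p. h (fst p) (snd p)) ` cbox (-M, -M) (M, M))"
    by (rule compact_continuous_image[OF continuous_on_subset[OF assms subset_UNIV]]) (rule compact_cbox)
  then have "bounded ((\<lambda>p. h (fst p) (snd p)) ` cbox (-M, -M) (M, M))" by (rule compact_imp_bounded)
  then obtain C where C: "\<And>z. z \<in> (\<lambda>p. h (fst p) (snd p)) ` cbox (-M, -M) (M, M) \<Longrightarrow> norm z \<le> C"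
    unfolding bounded_iff by blast
  show ?thesis
  proof (intro exI allI impI)
    fix r v :: real assume "\<bar>r\<bar> \<le> M" "\<bar>v\<bar> \<le> M"
    then have "(r, v) \<in> cbox (-M, -M) (M, M)" by (auto simp: cbox_Pair_iff)
    then show "\<bar>h r v\<bar> \<le> C" using C[of "h r v"] by force
  qed
qed

definition KF :: "(nat \<Rightarrow> nat \<Rightarrow> real \<Rightarrow> real \<Rightarrow> real) \<Rightarrow> real \<Rightarrow> real" where
  "KF D M = (SOME K. K \<ge> 0 \<and> (\<forall>r v. \<bar>r\<bar> \<le> M \<longrightarrow> \<bar>v\<bar> \<le> M \<longrightarrow>
      2 * \<bar>D 0 1 r v + r * D 1 1 r v\<bar> * M + \<bar>r * D 0 1 r v\<bar> \<le> K \<and>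
      \<bar>r * D 0 2 r v\<bar> * M^2 + \<bar>r * D 0 1 r v\<bar> * M \<le> K))"

lemma KF:
  assumes "smoothD D"
  shows "KF D M \<ge> 0 \<and> (\<forall>r v. \<bar>r\<bar> \<le> M \<longrightarrow> \<bar>v\<bar> \<le> M \<longrightarrow>
      2 * \<bar>D 0 1 r v + r * D 1 1 r v\<bar> * M + \<bar>r * D 0 1 r v\<bar> \<le> KF D M \<and>
      \<bar>r * D 0 2 r v\<bar> * M^2 + \<bar>r * D 0 1 r v\<bar> * M \<le> KF D M)"
proof -
  have cD: "continuous_on UNIV (\<lambda>p. D i j (fst p) (snd p))" for i j
    using D_cont[OF assms, of i j] by (simp add: case_prod_beta')
  have c1: "continuous_on UNIV (\<lambda>p. 2 * \<bar>D 0 1 (fst p) (snd p) + fst p * D 1 1 (fst p) (snd p)\<bar> * M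
       + \<bar>fst p * D 0 1 (fst p) (snd p)\<bar>)"
    by (intro continuous_intros cD)
  have c2: "continuous_on UNIV (\<lambda>p. \<bar>fst p * D 0 2 (fst p) (snd p)\<bar> * M^2 + \<bar>fst p * D 0 1 (fst p) (snd p)\<bar> * M)"
    by (intro continuous_intros cD)
  obtain K1 where K1: "\<forall>r v. \<bar>r\<bar> \<le> M \<longrightarrow> \<bar>v\<bar> \<le> M \<longrightarrow>
      \<bar>2 * \<bar>D 0 1 r v + r * D 1 1 r v\<bar> * M + \<bar>r * D 0 1 r v\<bar>\<bar> \<le> K1"
    using cbox_bound[OF c1, of M] by auto
  obtain K2 where K2: "\<forall>r v. \<bar>r\<bar> \<le> M \<longrightarrow> \<bar>v\<bar> \<le> M \<longrightarrow>
      \<bar>\<bar>r * D 0 2 r v\<bar> * M^2 + \<bar>r * D 0 1 r v\<bar> * M\<bar> \<le> K2"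
    using cbox_bound[OF c2, of M] by auto
  have "\<exists>K. K \<ge> 0 \<and> (\<forall>r v. \<bar>r\<bar> \<le> M \<longrightarrow> \<bar>v\<bar> \<le> M \<longrightarrow>
      2 * \<bar>D 0 1 r v + r * D 1 1 r v\<bar> * M + \<bar>r * D 0 1 r v\<bar> \<le> K \<and>
      \<bar>r * D 0 2 r v\<bar> * M^2 + \<bar>r * D 0 1 r v\<bar> * M \<le> K)"
  proof (intro exI[of _ "max 0 (max K1 K2)"] conjI allI impI)
    show "0 \<le> max 0 (max K1 K2)" by simp
    fix r v :: real assume rv: "\<bar>r\<bar> \<le> M" "\<bar>v\<bar> \<le> M"
    show "2 * \<bar>D 0 1 r v + r * D 1 1 r v\<bar> * M + \<bar>r * D 0 1 r v\<bar> \<le> max 0 (max K1 K2)"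
      using K1 rv by (smt (verit))
    show "\<bar>r * D 0 2 r v\<bar> * M^2 + \<bar>r * D 0 1 r v\<bar> * M \<le> max 0 (max K1 K2)"
      using K2 rv by (smt (verit))
  qed
  then show ?thesis unfolding KF_def by (rule someI_ex)
qed

definition Phi :: "real \<Rightarrow> real \<Rightarrow> real \<Rightarrow> real" where
  "Phi B0 K s = (B0 + 1) * exp ((2 * K + 1) * s) - 1"

lemma Phi_deriv: "((\<lambda>s. Phi B0 K s) has_real_derivative (B0 + 1) * (exp ((2 * K + 1) * s) * (2 * K + 1))) (at s)"
proof -
  have "((\<lambda>s. exp ((2 * K + 1) * s)) has_real_derivative exp ((2 * K + 1) * s) * (2 * K + 1)) (at s)"
    using DERIV_chain2[OF DERIV_exp DERIV_cmult[OF DERIV_ident, of "2 * K + 1"]] by simp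
  from DERIV_diff[OF DERIV_cmult[OF this, of "B0 + 1"] DERIV_const[of 1]]
  show ?thesis unfolding Phi_def by simp
qed

lemma Phi_mono: "K \<ge> 0 \<Longrightarrow> B0 \<ge> 0 \<Longrightarrow> s \<le> t \<Longrightarrow> Phi B0 K s \<le> Phi B0 K t"
  unfolding Phi_def by (intro diff_right_mono mult_left_mono) (auto simp: mult_left_mono)

lemma Phi_ge: "K \<ge> 0 \<Longrightarrow> B0 \<ge> 0 \<Longrightarrow> 0 \<le> s \<Longrightarrow> B0 \<le> Phi B0 K s"
proof -
  assume a: "K \<ge> 0" "B0 \<ge> 0" "0 \<le> s"
  have "Phi B0 K 0 \<le> Phi B0 K s" by (rule Phi_mono) (use a in auto)
  then show ?thesis by (simp add: Phi_def)
qed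

lemma Phi_cont: "continuous_on S (\<lambda>p. Phi B0 K (fst p))"
  unfolding Phi_def by (intro continuous_intros)


context sol begin

lemma P4:
  assumes sg: "\<sigma> = 1 \<or> \<sigma> = -1"
    and r0: "\<forall>x. rho0 x \<ge> 0" and e0: "\<forall>x. deriv u0 x + rho0 x \<ge> 0"
    and xi0: "\<forall>x. \<sigma> * deriv rho0 x \<ge> 0" and eta0: "\<forall>x. \<sigma> * eta 0 x \<ge> 0"
    and B0: "\<forall>x. \<bar>deriv rho0 x\<bar> \<le> B0"
    and f01: "\<forall>r\<ge>0. \<forall>v. D 0 1 r v \<le> 0"
    and f02: "\<forall>r\<ge>0. \<forall>v. \<sigma> * D 0 2 r v \<le> 0"
    and fRR: "\<forall>r\<ge>0. \<forall>v. \<sigma> * (2 * D 1 0 r v + r * D 2 0 r v) \<ge> 0"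
    and t: "t \<in> {0..<T}"
    and M: "\<forall>s\<in>{0..t}. \<forall>x. \<bar>rho s x\<bar> \<le> M \<and> \<bar>u s x\<bar> \<le> M \<and> \<bar>ux s x\<bar> \<le> M \<and> \<bar>eta s x\<bar> \<le> M"
  shows "\<forall>s\<in>{0..t}. \<forall>x. \<sigma> * xi s x \<le> Phi B0 (KF D M) t"
proof -
  define K where "K = KF D M"
  have Kp: "K \<ge> 0" "\<And>r v. \<bar>r\<bar> \<le> M \<Longrightarrow> \<bar>v\<bar> \<le> M \<Longrightarrow>
      2 * \<bar>D 0 1 r v + r * D 1 1 r v\<bar> * M + \<bar>r * D 0 1 r v\<bar> \<le> K \<and>
      \<bar>r * D 0 2 r v\<bar> * M^2 + \<bar>r * D 0 1 r v\<bar> * M \<le> K"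
    using KF[OF sD, of M] unfolding K_def by auto
  have B0p: "B0 \<ge> 0" using B0 by (meson abs_ge_zero order_trans)
  have sab: "\<bar>\<sigma>\<bar> = 1" using sg by auto
  have xi0': "\<sigma> * xi 0 x \<ge> 0" for x using xi0 by (simp add: xi_init)
  have P3': "\<sigma> * xi s x \<ge> 0" if "s \<in> {0..<T}" for s x
    using P3[OF sg r0 e0 _ eta0 f01 f02] xi0' that by blast
  have init_b: "\<sigma> * xi 0 x \<le> B0" for x
  proof -
    have "\<sigma> * xi 0 x \<le> \<bar>\<sigma> * xi 0 x\<bar>" by simp
    also have "\<dots> = \<bar>deriv rho0 x\<bar>" using sab by (simp add: abs_mult xi_init)
    finally show ?thesis using B0 by (meson order_trans)
  qed
  have main: "\<forall>s\<in>{0..t}. \<forall>x. Phi B0 K s - \<sigma> * xi s x \<ge> 0"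
  proof (cases "t = 0")
    case True
    then show ?thesis using init_b by (simp add: Phi_def)
  next
    case False
    then have t1: "0 < t" "t < T" using t by auto
    have rpos: "rho s y \<ge> 0" if "s \<in> {0..t}" for s y using P1[OF r0] that t1 by auto
    have zpos: "\<sigma> * xi s y \<ge> 0" if "s \<in> {0..t}" for s y using P3' that t1 by auto
    obtain B where B: "\<forall>s\<in>{0..t}. \<forall>x. \<bar>rho s x\<bar> \<le> B \<and> \<bar>u s x\<bar> \<le> B \<and> \<bar>xi s x\<bar> \<le> B \<and> \<bar>ux s x\<bar> \<le> B \<and> \<bar>eta s x\<bar> \<le> B"
      using bnds[OF t1(2)] by blast
    obtain C00 where C00: "\<forall>s\<in>{0..t}. \<forall>x. \<bar>DD 0 0 s x\<bar> \<le> C00" using DD_bnd[OF t1(2)] by blast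
    obtain C10 where C10: "\<forall>s\<in>{0..t}. \<forall>x. \<bar>DD 1 0 s x\<bar> \<le> C10" using DD_bnd[OF t1(2)] by blast
    define G1 where "G1 = C00 + B * C10"
    define L where "L = G1 + K + 1"
    define dPhi where "dPhi s = (B0 + 1) * (exp ((2 * K + 1) * s) * (2 * K + 1))" for s
    have gRb: "\<bar>DD 0 0 s y + rho s y * DD 1 0 s y\<bar> \<le> G1" if "s \<in> {0..t}" for s y
      using prod_le[of "rho s y" B "DD 1 0 s y" C10] B C00 C10 that unfolding G1_def by (smt (verit))
    have cA: "continuous_on ({0..t}\<times>UNIV) (\<lambda>(s,y). Phi B0 K s - \<sigma> * xi s y)"
    proof -
      have "cont2 S (\<lambda>s y. Phi B0 K s - \<sigma> * xi s y)" by (intro continuous_intros Phi_cont rhoP(2))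
      then show ?thesis by (rule contS[OF _ t1(2)])
    qed
    have bd: "\<bar>Phi B0 K s - \<sigma> * xi s y\<bar> \<le> Phi B0 K t + B \<and> \<bar>Phi B0 K s - \<sigma> * xi s y\<bar> \<le> Phi B0 K t + B"
      if "s \<in> {0..t}" for s y
    proof -
      have "0 \<le> Phi B0 K s" "Phi B0 K s \<le> Phi B0 K t"
        using Phi_ge[OF Kp(1) B0p, of s] Phi_mono[OF Kp(1) B0p, of s t] B0p that by auto
      moreover have "\<bar>\<sigma> * xi s y\<bar> \<le> B" using B that sab by (auto simp: abs_mult)
      ultimately show ?thesis by auto
    qed
    have d1x: "((\<lambda>y. Phi B0 K s - \<sigma> * xi s y) has_real_derivative - (\<sigma> * xix s y)) (at y)" if "0 < s" "s \<le> t" for s y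
      by (rule DERIV_cong[OF DERIV_diff[OF DERIV_const DERIV_cmult[OF xiP(4)]]]) (use that t1 in auto)
    have d1t: "((\<lambda>s'. Phi B0 K s' - \<sigma> * xi s' y) has_real_derivative dPhi s - \<sigma> * xiT s y) (at s)" if "0 < s" "s \<le> t" for s y
      unfolding dPhi_def by (rule DERIV_diff[OF Phi_deriv DERIV_cmult[OF xi_dt]]) (use that t1 in auto)
    have step: False if s: "0 < s" "s \<le> t" and \<epsilon>: "0 < \<epsilon>" and a: "Phi B0 K s - \<sigma> * xi s y = - \<epsilon> * psi L s y"
      and ax: "- (\<sigma> * xix s y) = - \<epsilon> * psix L s y" and at: "dPhi s - \<sigma> * xiT s y \<le> - \<epsilon> * (L * psi L s y)" for s y \<epsilon>
    proof -
      let ?P = "psi L s y" and ?Q = "psix L s y"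
      have sI: "s \<in> {0..t}" using s by auto
      have P: "?P > 0" by (rule psi_pos)
      have Q: "\<bar>?Q\<bar> \<le> ?P" by (rule psix_le)
      have Ms: "\<bar>rho s y\<bar> \<le> M" "\<bar>u s y\<bar> \<le> M" "\<bar>ux s y\<bar> \<le> M" "\<bar>eta s y\<bar> \<le> M" using M sI by auto
      have Mp: "M \<ge> 0" using Ms(1) by linarith
      let ?gR = "DD 0 0 s y + rho s y * DD 1 0 s y"
      let ?sgRR = "\<sigma> * (2 * DD 1 0 s y + rho s y * DD 2 0 s y)"
      let ?c = "- (2 * (DD 0 1 s y + rho s y * DD 1 1 s y) * ux s y) + rho s y * DD 0 1 s y"
      let ?N = "- (\<sigma> * D 0 2 (rho s y) (u s y) * (rho s y * ux s y ^ 2)) - rho s y * DD 0 1 s y * (\<sigma> * eta s y)"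
      let ?z = "\<sigma> * xi s y"
      have eq0: "\<sigma> * xiT s y = - ?gR * (\<sigma> * xix s y) - ?sgRR * (xi s y * xi s y) + ?c * ?z + ?N"
        unfolding xiT_def DD_def by (simp add: algebra_simps power2_eq_square)
      have z: "?z = Phi B0 K s + \<epsilon> * ?P" using a by simp
      have sx: "\<sigma> * xix s y = \<epsilon> * ?Q" using ax by simp
      have t1': "- ?gR * (\<epsilon> * ?Q) \<le> \<epsilon> * (G1 * ?P)"
      proof -
        have "- ?gR * ?Q \<le> G1 * ?P" using prod_ub[of "- ?gR" G1 ?Q ?P] gRb[OF sI, of y] Q by auto
        then have "\<epsilon> * (- ?gR * ?Q) \<le> \<epsilon> * (G1 * ?P)" using \<epsilon> by (intro mult_left_mono) auto
        then show ?thesis by (simp add: algebra_simps)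
      qed
      have t2: "?sgRR * (xi s y * xi s y) \<ge> 0"
      proof -
        have "?sgRR \<ge> 0" using fRR rpos[OF sI, of y] unfolding DD_def by auto
        then show ?thesis by simp
      qed
      have KD: "2 * \<bar>DD 0 1 s y + rho s y * DD 1 1 s y\<bar> * M + \<bar>rho s y * DD 0 1 s y\<bar> \<le> K"
        "\<bar>rho s y * DD 0 2 s y\<bar> * M^2 + \<bar>rho s y * DD 0 1 s y\<bar> * M \<le> K"
        using Kp(2)[OF Ms(1,2)] unfolding DD_def by auto
      have t3: "?c * ?z \<le> K * ?z"
      proof -
        have c1: "\<bar>?c\<bar> \<le> \<bar>2 * (DD 0 1 s y + rho s y * DD 1 1 s y) * ux s y\<bar> + \<bar>rho s y * DD 0 1 s y\<bar>"
          by (rule order_trans[OF abs_triangle_ineq]) simp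
        have c2: "\<bar>2 * (DD 0 1 s y + rho s y * DD 1 1 s y) * ux s y\<bar> = 2 * \<bar>DD 0 1 s y + rho s y * DD 1 1 s y\<bar> * \<bar>ux s y\<bar>"
          by (simp only: abs_mult abs_numeral)
        have c3: "2 * \<bar>DD 0 1 s y + rho s y * DD 1 1 s y\<bar> * \<bar>ux s y\<bar> \<le> 2 * \<bar>DD 0 1 s y + rho s y * DD 1 1 s y\<bar> * M"
          using Ms(3) by (intro mult_left_mono) auto
        have "\<bar>?c\<bar> \<le> K" using c1 c2 c3 KD(1) by linarith
        then have "?c \<le> K" by linarith
        then show ?thesis using zpos[OF sI, of y] by (intro mult_right_mono) auto
      qed
      have t4: "?N \<le> K"
      proof -
        have u2: "ux s y ^ 2 \<le> M^2" using power_mono[of "\<bar>ux s y\<bar>" M 2] Ms(3) by simp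
        have "- (\<sigma> * D 0 2 (rho s y) (u s y) * (rho s y * ux s y ^ 2)) \<le> \<bar>\<sigma> * D 0 2 (rho s y) (u s y) * (rho s y * ux s y ^ 2)\<bar>"
          by simp
        also have "\<dots> = \<bar>rho s y * DD 0 2 s y\<bar> * ux s y ^ 2" using sab unfolding DD_def by (simp add: abs_mult)
        also have "\<dots> \<le> \<bar>rho s y * DD 0 2 s y\<bar> * M^2" using u2 by (intro mult_left_mono) auto
        finally have n1: "- (\<sigma> * D 0 2 (rho s y) (u s y) * (rho s y * ux s y ^ 2)) \<le> \<bar>rho s y * DD 0 2 s y\<bar> * M^2" .
        have "- (rho s y * DD 0 1 s y * (\<sigma> * eta s y)) \<le> \<bar>rho s y * DD 0 1 s y\<bar> * M"
          using prod_ub[of "- (rho s y * DD 0 1 s y)" "\<bar>rho s y * DD 0 1 s y\<bar>" "\<sigma> * eta s y" M] Ms(4) sab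
          by (auto simp: abs_mult)
        then show ?thesis using n1 KD(2) by linarith
      qed
      have "\<sigma> * xiT s y \<le> \<epsilon> * (G1 * ?P) + K * ?z + K"
        using eq0 t1' t2 t3 t4 sx by (simp only:)
      moreover have "K * ?z = K * Phi B0 K s + K * (\<epsilon> * ?P)" using z by (simp add: algebra_simps)
      moreover have "K * Phi B0 K s = K * ((B0 + 1) * exp ((2 * K + 1) * s)) - K" by (simp add: Phi_def algebra_simps)
      moreover have "dPhi s = 2 * (K * ((B0 + 1) * exp ((2 * K + 1) * s))) + (B0 + 1) * exp ((2 * K + 1) * s)"
        by (simp add: dPhi_def algebra_simps)
      moreover have "\<epsilon> * (L * ?P) = \<epsilon> * (G1 * ?P) + K * (\<epsilon> * ?P) + \<epsilon> * ?P" by (simp add: L_def algebra_simps)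
      moreover have "(B0 + 1) * exp ((2 * K + 1) * s) > 0" using B0p by simp
      moreover have "K * ((B0 + 1) * exp ((2 * K + 1) * s)) \<ge> 0" using B0p Kp(1) by simp
      moreover have "\<epsilon> * ?P > 0" using \<epsilon> P by simp
      ultimately show False using at by linarith
    qed
    have "\<forall>s\<in>{0..t}. \<forall>x. Phi B0 K s - \<sigma> * xi s x \<ge> 0 \<and> Phi B0 K s - \<sigma> * xi s x \<ge> 0"
      by (rule mp2[where A1x="\<lambda>s y. - (\<sigma> * xix s y)" and A2x="\<lambda>s y. - (\<sigma> * xix s y)"
            and A1t="\<lambda>s y. dPhi s - \<sigma> * xiT s y" and A2t="\<lambda>s y. dPhi s - \<sigma> * xiT s y"
            and B="Phi B0 K t + B" and L=L, OF t1(1) cA cA bd _ d1x d1t d1x d1t])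
         (use init_b step in \<open>auto simp: Phi_def\<close>)
    then show ?thesis by auto
  qed
  show ?thesis
  proof (intro ballI allI)
    fix s x assume s: "s \<in> {0..t}"
    have "\<sigma> * xi s x \<le> Phi B0 K s" using main s by auto
    also have "\<dots> \<le> Phi B0 K t" using Phi_mono[OF Kp(1) B0p] s by auto
    finally show "\<sigma> * xi s x \<le> Phi B0 (KF D M) t" unfolding K_def .
  qed
qed

end


theorem mainTheorem16:
  fixes f :: "real \<Rightarrow> real \<Rightarrow> real" and rho0 u0 :: "real \<Rightarrow> real"
  assumes f_smooth: "smooth2 f"
    and fu_nonpos: "\<forall>r\<ge>0. \<forall>v. deriv (\<lambda>w. f r w) v \<le> 0"
    and rho0_reg: "C1b rho0" and u0_reg: "C2b u0"
    and rho0_nonneg: "\<forall>x. rho0 x \<ge> 0"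
    and e0_nonneg: "\<forall>x. deriv u0 x + rho0 x \<ge> 0"
  shows
   "((\<forall>x. deriv rho0 x \<ge> 0) \<and> (\<forall>x. deriv (deriv u0) x + deriv rho0 x \<ge> 0) \<and>
     (\<forall>r\<ge>0. \<forall>v. deriv (\<lambda>s. deriv (\<lambda>q. q * f q v) s) r \<ge> 0) \<and>
     (\<forall>r\<ge>0. \<forall>v. deriv (\<lambda>w. deriv (\<lambda>z. f r z) w) v \<le> 0)
     \<longrightarrow> (\<exists>\<Phi> :: real \<Rightarrow> real \<Rightarrow> real \<Rightarrow> real.
          \<forall>T rho u. classical_solution f T rho0 u0 rho u \<and> extra_regular T rho u \<longrightarrow>
            (\<forall>t\<in>{0..<T}. \<forall>x. px rho t x \<ge> 0 \<and> px (efun rho u) t x \<ge> 0) \<and>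
            (\<forall>t\<in>{0..<T}. \<forall>M. (\<forall>s\<in>{0..t}. \<forall>x. \<bar>rho s x\<bar> \<le> M \<and> \<bar>u s x\<bar> \<le> M \<and>
                                   \<bar>px u s x\<bar> \<le> M \<and> \<bar>px (efun rho u) s x\<bar> \<le> M)
               \<longrightarrow> (\<forall>s\<in>{0..t}. \<forall>x. px rho s x \<le> \<Phi> T t M)))) \<and>
    ((\<forall>x. deriv rho0 x \<le> 0) \<and> (\<forall>x. deriv (deriv u0) x + deriv rho0 x \<le> 0) \<and>
     (\<forall>r\<ge>0. \<forall>v. deriv (\<lambda>s. deriv (\<lambda>q. q * f q v) s) r \<le> 0) \<and>
     (\<forall>r\<ge>0. \<forall>v. deriv (\<lambda>w. deriv (\<lambda>z. f r z) w) v \<ge> 0)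
     \<longrightarrow> (\<exists>\<Phi> :: real \<Rightarrow> real \<Rightarrow> real \<Rightarrow> real.
          \<forall>T rho u. classical_solution f T rho0 u0 rho u \<and> extra_regular T rho u \<longrightarrow>
            (\<forall>t\<in>{0..<T}. \<forall>x. px rho t x \<le> 0 \<and> px (efun rho u) t x \<le> 0) \<and>
            (\<forall>t\<in>{0..<T}. \<forall>M. (\<forall>s\<in>{0..t}. \<forall>x. \<bar>rho s x\<bar> \<le> M \<and> \<bar>u s x\<bar> \<le> M \<and>
                                   \<bar>px u s x\<bar> \<le> M \<and> \<bar>px (efun rho u) s x\<bar> \<le> M)
               \<longrightarrow> (\<forall>s\<in>{0..t}. \<forall>x. \<Phi> T t M \<le> px rho s x))))"
proof -
  obtain D where D0: "D 0 0 = f" and sD: "smoothD D" using smooth2_D[OF f_smooth] by blast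
  have D01: "deriv (\<lambda>w. f r w) v = D 0 1 r v" for r v
    unfolding D0[symmetric] using DERIV_imp_deriv[OF D_v[OF sD, of 0 0 r v]] by simp
  have D02: "deriv (\<lambda>w. deriv (\<lambda>z. f r z) w) v = D 0 2 r v" for r v
  proof -
    have "(\<lambda>w. deriv (\<lambda>z. f r z) w) = (\<lambda>w. D 0 1 r w)" using D01 by auto
    then show ?thesis using DERIV_imp_deriv[OF D_v[OF sD, of 0 "Suc 0" r v]] by (simp add: numeral_2_eq_2)
  qed
  have DRR: "deriv (\<lambda>s. deriv (\<lambda>q. q * f q v) s) r = 2 * D 1 0 r v + r * D 2 0 r v" for r v
  proof -
    have inner: "deriv (\<lambda>q. q * f q v) s = D 0 0 s v + s * D 1 0 s v" for s
    proof -
      have "((\<lambda>q. q * D 0 0 q v) has_real_derivative D 0 0 s v + s * D 1 0 s v) (at s)"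
        by (rule DERIV_cong[OF DERIV_mult[OF DERIV_ident D_r[OF sD]]]) (simp add: algebra_simps)
      then show ?thesis unfolding D0[symmetric] by (rule DERIV_imp_deriv)
    qed
    have "((\<lambda>s. D 0 0 s v + s * D 1 0 s v) has_real_derivative 2 * D 1 0 r v + r * D 2 0 r v) (at r)"
      by (rule DERIV_cong[OF DERIV_add[OF D_r[OF sD] DERIV_mult[OF DERIV_ident D_r[OF sD]]]])
         (simp add: algebra_simps numeral_2_eq_2)
    moreover have "(\<lambda>s. deriv (\<lambda>q. q * f q v) s) = (\<lambda>s. D 0 0 s v + s * D 1 0 s v)" using inner by auto
    ultimately show ?thesis by (simp add: DERIV_imp_deriv)
  qed
  have f01: "\<forall>r\<ge>0. \<forall>v. D 0 1 r v \<le> 0" using fu_nonpos D01 by auto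
  have r0diff: "rho0 differentiable (at x)" for x using rho0_reg unfolding C1b_def by auto
  obtain B0 where B0: "\<forall>x. \<bar>deriv rho0 x\<bar> \<le> B0"
  proof -
    have "bounded (range (deriv rho0))" using rho0_reg unfolding C1b_def by auto
    then obtain B where "\<forall>z\<in>range (deriv rho0). norm z \<le> B" unfolding bounded_iff by blast
    then show ?thesis using that by auto
  qed
  have du0diff: "deriv u0 differentiable (at x)" for x using u0_reg unfolding C2b_def C1b_def by auto
  have ed: "deriv (\<lambda>y. deriv u0 y + rho0 y) x = deriv (deriv u0) x + deriv rho0 x" for x
    by (rule DERIV_imp_deriv[OF DERIV_add]) (use du0diff r0diff in \<open>auto simp: DERIV_deriv_iff_real_differentiable\<close>)
  have r0: "\<forall>x. rho0 x \<ge> 0" using rho0_nonneg .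
  have e0: "\<forall>x. deriv u0 x + rho0 x \<ge> 0" using e0_nonneg .
  have gen: "(\<forall>t\<in>{0..<T}. \<forall>x. \<sigma> * px rho t x \<ge> 0 \<and> \<sigma> * px (efun rho u) t x \<ge> 0) \<and>
            (\<forall>t\<in>{0..<T}. \<forall>M. (\<forall>s\<in>{0..t}. \<forall>x. \<bar>rho s x\<bar> \<le> M \<and> \<bar>u s x\<bar> \<le> M \<and>
                                   \<bar>px u s x\<bar> \<le> M \<and> \<bar>px (efun rho u) s x\<bar> \<le> M)
               \<longrightarrow> (\<forall>s\<in>{0..t}. \<forall>x. \<sigma> * px rho s x \<le> Phi B0 (KF D M) t))"
    if sg: "\<sigma> = 1 \<or> \<sigma> = -1" and xi0: "\<forall>x. \<sigma> * deriv rho0 x \<ge> 0"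
      and eta0: "\<forall>x. \<sigma> * (deriv (deriv u0) x + deriv rho0 x) \<ge> 0"
      and f02: "\<forall>r\<ge>0. \<forall>v. \<sigma> * D 0 2 r v \<le> 0"
      and fRR: "\<forall>r\<ge>0. \<forall>v. \<sigma> * (2 * D 1 0 r v + r * D 2 0 r v) \<ge> 0"
      and sol: "classical_solution f T rho0 u0 rho u \<and> extra_regular T rho u"
    for \<sigma> T rho u
  proof -
    interpret S: sol D T rho0 u0 rho u
      by unfold_locales (use sD sol D0 in auto)
    have eta0': "\<forall>x. \<sigma> * S.eta 0 x \<ge> 0" using eta0 by (simp add: S.eta_init ed)
    have xi0': "\<forall>x. \<sigma> * S.xi 0 x \<ge> 0" using xi0 by (simp add: S.xi_init)
    have p3: "\<forall>t\<in>{0..<T}. \<forall>x. \<sigma> * S.xi t x \<ge> 0 \<and> \<sigma> * S.eta t x \<ge> 0"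
      by (rule S.P3[OF sg r0 e0 xi0' eta0' f01 f02])
    have p4: "\<forall>s\<in>{0..t}. \<forall>x. \<sigma> * S.xi s x \<le> Phi B0 (KF D M) t"
      if "t \<in> {0..<T}" "\<forall>s\<in>{0..t}. \<forall>x. \<bar>rho s x\<bar> \<le> M \<and> \<bar>u s x\<bar> \<le> M \<and> \<bar>S.ux s x\<bar> \<le> M \<and> \<bar>S.eta s x\<bar> \<le> M"
      for t M
      by (rule S.P4[OF sg r0 e0 xi0 eta0' B0 f01 f02 fRR that])
    show ?thesis using p3 p4 unfolding S.xi_def S.eta_def S.e_def S.ux_def by blast
  qed
  show ?thesis
  proof (intro conjI impI)
    assume H: "(\<forall>x. deriv rho0 x \<ge> 0) \<and> (\<forall>x. deriv (deriv u0) x + deriv rho0 x \<ge> 0) \<and>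
     (\<forall>r\<ge>0. \<forall>v. deriv (\<lambda>s. deriv (\<lambda>q. q * f q v) s) r \<ge> 0) \<and>
     (\<forall>r\<ge>0. \<forall>v. deriv (\<lambda>w. deriv (\<lambda>z. f r z) w) v \<le> 0)"
    show "\<exists>\<Phi> :: real \<Rightarrow> real \<Rightarrow> real \<Rightarrow> real.
          \<forall>T rho u. classical_solution f T rho0 u0 rho u \<and> extra_regular T rho u \<longrightarrow>
            (\<forall>t\<in>{0..<T}. \<forall>x. px rho t x \<ge> 0 \<and> px (efun rho u) t x \<ge> 0) \<and>
            (\<forall>t\<in>{0..<T}. \<forall>M. (\<forall>s\<in>{0..t}. \<forall>x. \<bar>rho s x\<bar> \<le> M \<and> \<bar>u s x\<bar> \<le> M \<and>
                                   \<bar>px u s x\<bar> \<le> M \<and> \<bar>px (efun rho u) s x\<bar> \<le> M)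
               \<longrightarrow> (\<forall>s\<in>{0..t}. \<forall>x. px rho s x \<le> \<Phi> T t M))"
    proof (intro exI[of _ "\<lambda>T t M. Phi B0 (KF D M) t"] allI impI)
      fix T rho u assume sol: "classical_solution f T rho0 u0 rho u \<and> extra_regular T rho u"
      have f02: "\<forall>r\<ge>0. \<forall>v. 1 * D 0 2 r v \<le> 0" using H D02 by auto
      have fRR: "\<forall>r\<ge>0. \<forall>v. 1 * (2 * D 1 0 r v + r * D 2 0 r v) \<ge> 0" using H DRR by auto
      have "(\<forall>t\<in>{0..<T}. \<forall>x. 1 * px rho t x \<ge> 0 \<and> 1 * px (efun rho u) t x \<ge> 0) \<and>
            (\<forall>t\<in>{0..<T}. \<forall>M. (\<forall>s\<in>{0..t}. \<forall>x. \<bar>rho s x\<bar> \<le> M \<and> \<bar>u s x\<bar> \<le> M \<and>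
                                   \<bar>px u s x\<bar> \<le> M \<and> \<bar>px (efun rho u) s x\<bar> \<le> M)
               \<longrightarrow> (\<forall>s\<in>{0..t}. \<forall>x. 1 * px rho s x \<le> Phi B0 (KF D M) t))"
        by (rule gen[OF _ _ _ f02 fRR sol]) (use H in auto)
      then show "(\<forall>t\<in>{0..<T}. \<forall>x. px rho t x \<ge> 0 \<and> px (efun rho u) t x \<ge> 0) \<and>
            (\<forall>t\<in>{0..<T}. \<forall>M. (\<forall>s\<in>{0..t}. \<forall>x. \<bar>rho s x\<bar> \<le> M \<and> \<bar>u s x\<bar> \<le> M \<and>
                                   \<bar>px u s x\<bar> \<le> M \<and> \<bar>px (efun rho u) s x\<bar> \<le> M)
               \<longrightarrow> (\<forall>s\<in>{0..t}. \<forall>x. px rho s x \<le> (\<lambda>T t M. Phi B0 (KF D M) t) T t M))"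
        by simp
    qed
  next
    assume H: "(\<forall>x. deriv rho0 x \<le> 0) \<and> (\<forall>x. deriv (deriv u0) x + deriv rho0 x \<le> 0) \<and>
     (\<forall>r\<ge>0. \<forall>v. deriv (\<lambda>s. deriv (\<lambda>q. q * f q v) s) r \<le> 0) \<and>
     (\<forall>r\<ge>0. \<forall>v. deriv (\<lambda>w. deriv (\<lambda>z. f r z) w) v \<ge> 0)"
    show "\<exists>\<Phi> :: real \<Rightarrow> real \<Rightarrow> real \<Rightarrow> real.
          \<forall>T rho u. classical_solution f T rho0 u0 rho u \<and> extra_regular T rho u \<longrightarrow>
            (\<forall>t\<in>{0..<T}. \<forall>x. px rho t x \<le> 0 \<and> px (efun rho u) t x \<le> 0) \<and>
            (\<forall>t\<in>{0..<T}. \<forall>M. (\<forall>s\<in>{0..t}. \<forall>x. \<bar>rho s x\<bar> \<le> M \<and> \<bar>u s x\<bar> \<le> M \<and>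
                                   \<bar>px u s x\<bar> \<le> M \<and> \<bar>px (efun rho u) s x\<bar> \<le> M)
               \<longrightarrow> (\<forall>s\<in>{0..t}. \<forall>x. \<Phi> T t M \<le> px rho s x))"
    proof (intro exI[of _ "\<lambda>T t M. - Phi B0 (KF D M) t"] allI impI)
      fix T rho u assume sol: "classical_solution f T rho0 u0 rho u \<and> extra_regular T rho u"
      have f02: "\<forall>r\<ge>0. \<forall>v. -1 * D 0 2 r v \<le> 0" using H D02 by auto
      have fRR: "\<forall>r\<ge>0. \<forall>v. -1 * (2 * D 1 0 r v + r * D 2 0 r v) \<ge> 0"
      proof (intro allI impI)
        fix r v :: real assume "r \<ge> 0"
        then have "deriv (\<lambda>s. deriv (\<lambda>q. q * f q v) s) r \<le> 0" using H by blast
        then have "2 * D 1 0 r v + r * D 2 0 r v \<le> 0" using DRR[of v r] by simp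
        then show "-1 * (2 * D 1 0 r v + r * D 2 0 r v) \<ge> 0" by simp
      qed
      have "(\<forall>t\<in>{0..<T}. \<forall>x. -1 * px rho t x \<ge> 0 \<and> -1 * px (efun rho u) t x \<ge> 0) \<and>
            (\<forall>t\<in>{0..<T}. \<forall>M. (\<forall>s\<in>{0..t}. \<forall>x. \<bar>rho s x\<bar> \<le> M \<and> \<bar>u s x\<bar> \<le> M \<and>
                                   \<bar>px u s x\<bar> \<le> M \<and> \<bar>px (efun rho u) s x\<bar> \<le> M)
               \<longrightarrow> (\<forall>s\<in>{0..t}. \<forall>x. -1 * px rho s x \<le> Phi B0 (KF D M) t))"
      proof -
        have xi0m: "\<forall>x. -1 * deriv rho0 x \<ge> 0" using H by auto
        have eta0m: "\<forall>x. -1 * (deriv (deriv u0) x + deriv rho0 x) \<ge> 0"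
        proof
          fix x have "deriv (deriv u0) x + deriv rho0 x \<le> 0" using H by blast
          then show "-1 * (deriv (deriv u0) x + deriv rho0 x) \<ge> 0" by simp
        qed
        show ?thesis by (rule gen[OF _ xi0m eta0m f02 fRR sol]) simp
      qed
      note G = this
      show "(\<forall>t\<in>{0..<T}. \<forall>x. px rho t x \<le> 0 \<and> px (efun rho u) t x \<le> 0) \<and>
            (\<forall>t\<in>{0..<T}. \<forall>M. (\<forall>s\<in>{0..t}. \<forall>x. \<bar>rho s x\<bar> \<le> M \<and> \<bar>u s x\<bar> \<le> M \<and>
                                   \<bar>px u s x\<bar> \<le> M \<and> \<bar>px (efun rho u) s x\<bar> \<le> M)
               \<longrightarrow> (\<forall>s\<in>{0..t}. \<forall>x. (\<lambda>T t M. - Phi B0 (KF D M) t) T t M \<le> px rho s x))"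
      proof (intro conjI ballI allI impI)
        fix t x assume t: "t \<in> {0..<T}"
        have "-1 * px rho t x \<ge> 0 \<and> -1 * px (efun rho u) t x \<ge> 0" using G t by blast
        then show "px rho t x \<le> 0" by auto
      next
        fix t x assume t: "t \<in> {0..<T}"
        have "-1 * px rho t x \<ge> 0 \<and> -1 * px (efun rho u) t x \<ge> 0" using G t by blast
        then show "px (efun rho u) t x \<le> 0" by auto
      next
        fix t M s x assume t: "t \<in> {0..<T}" and hM: "\<forall>s\<in>{0..t}. \<forall>x. \<bar>rho s x\<bar> \<le> M \<and> \<bar>u s x\<bar> \<le> M \<and>
                                   \<bar>px u s x\<bar> \<le> M \<and> \<bar>px (efun rho u) s x\<bar> \<le> M" and s: "s \<in> {0..t}"
        have "-1 * px rho s x \<le> Phi B0 (KF D M) t" using G t hM s by blast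
        then show "(\<lambda>T t M. - Phi B0 (KF D M) t) T t M \<le> px rho s x" by simp
      qed
    qed
  qed
qed


end
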